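(* Let $\mathfrak{g}$ be a Lie algebra and $\beta\in\mathbb{C}$. Let $R_{J,I,E,F}$ be the $\mathbb{C}[\partial]$-module $\mathbb{C}[\partial]\otimes(\mathfrak{g}\ltimes\mathfrak{g}_{\mathrm{ad}})[u,v]\ \oplus\ \mathbb{C}[\partial]\otimes\big(\mathfrak{h}[u,v]/\mathbb{C}E[0,0]\big)$, where $\mathfrak{h}=\mathrm{span}\{E,F\}$ is a two-dimensional abelian Lie algebra, equipped with the $\lambda$-bracket (extended by sesquilinearity) given on generators by \begin{align*} &[J_a[m,n]_\lambda J_b[t,s]]=J_{[a,b]}[m+t,n+s],\quad [J_a[m,n]_\lambda I_b[t,s]]=I_{[a,b]}[m+t,n+s],\quad [I_a[m,n]_\lambda I_b[t,s]]=0,\\ &[J_a[m,n]_\lambda E[t,s]]=\beta\frac{sm-tn}{t+s}I_a[m+t-1,n+s-1],\\ &[J_a[m,n]_\lambda F[t,s]]=-\beta\Big(\lambda+\frac{m+n}{t+s+2}(\lambda+\partial)\Big)I_a[m+t,n+s], \end{align*} all brackets among the $I$, $E$, $F$ generators being zero, and the remaining brackets defined by skew-symmetry $[x_\lambda y]=-[y_{-\lambda-\partial}x]$. Then $R_{J,I,E,F}$ is a Lie conformal algebra.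
   Context: $\mathfrak{g}\ltimes\mathfrak{g}_{\mathrm{ad}}$ is the Lie algebra of pairs $(a,x)$ with bracket $[(a,x),(b,y)]=([a,b],[a,y]-[b,x])$; for a Lie algebra $L$, $L[u,v]=L\otimes\mathbb{C}[u,v]$ with bracket $[x\otimes f,y\otimes g]=[x,y]\otimes fg$. Notation: $J_a[m,n]=(a,0)\otimes u^mv^n$, $I_a[m,n]=(0,a)\otimes u^mv^n$, $E[m,n]=E\otimes u^mv^n$, $F[m,n]=F\otimes u^mv^n$ for $m,n\ge0$ (and $E[0,0]$ is set to $0$). A Lie conformal algebra is a $\mathbb{C}[\partial]$-module $R$ with a bilinear map $[\cdot_\lambda\cdot]:R\otimes R\to R[\lambda]$ satisfying sesquilinearity $[\partial a_\lambda b]=-\lambda[a_\lambda b]$, $[a_\lambda\partial b]=(\lambda+\partial)[a_\lambda b]$, skew-symmetry $[a_\lambda b]=-[b_{-\lambda-\partial}a]$, and the Jacobi identity $[a_\lambda[b_\mu c]]=[b_\mu[a_\lambda c]]+[[a_\lambda b]_{\lambda+\mu}c]$. *)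

theory Defs
  imports Complex_Main "HOL-Library.Function_Algebras" "HOL-Library.Product_Plus"
begin

definition complex_lie_algebra ::
  "(complex \<Rightarrow> 'a::ab_group_add \<Rightarrow> 'a) \<Rightarrow> ('a \<Rightarrow> 'a \<Rightarrow> 'a) \<Rightarrow> bool" where
  "complex_lie_algebra sm br \<longleftrightarrow>
     vector_space sm
   \<and> (\<forall>x y z. br (x + y) z = br x z + br y z)
   \<and> (\<forall>x y z. br x (y + z) = br x y + br x z)
   \<and> (\<forall>c x y. br (sm c x) y = sm c (br x y))
   \<and> (\<forall>c x y. br x (sm c y) = sm c (br x y))
   \<and> (\<forall>x. br x x = 0)
   \<and> (\<forall>x y z. br x (br y z) + br y (br z x) + br z (br x y) = 0)"

text \<open>The module is the subset C of the
  additive group 'r, with complex scaling sc and the action of d given by D.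
  The lambda-bracket is given by its coefficients: lb a b j is the coefficient of
  lambda^j in [a_lambda b], an element of C[lambda] (finitely many nonzero coefficients).
  Skew-symmetry: substituting lambda := -lambda - d into sum_i lambda^i c_i gives
  sum_i (-lambda-d)^i c_i, whose lambda^j coefficient is
  sum_i (-1)^i (i choose j) d^(i-j) c_i.
  Jacobi identity: compare coefficients of lambda^p mu^q; the term
  [[a_lambda b]_(lambda+mu) c] = sum_j sum_r lambda^j (lambda+mu)^r lb (lb a b j) c r
  has lambda^p mu^q coefficient sum_(j<=p) ((p+q-j) choose q) lb (lb a b j) c (p+q-j).\<close>

definition lie_conformal_algebra ::
  "'r::ab_group_add set \<Rightarrow> (complex \<Rightarrow> 'r \<Rightarrow> 'r) \<Rightarrow> ('r \<Rightarrow> 'r) \<Rightarrow> ('r \<Rightarrow> 'r \<Rightarrow> nat \<Rightarrow> 'r) \<Rightarrow> bool"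
  where
  "lie_conformal_algebra C sc D lb \<longleftrightarrow>
     \<comment> \<open>C is a complex vector space and D is a linear endomorphism (C[d]-module)\<close>
     vector_space sc \<and> 0 \<in> C \<and> (\<forall>a\<in>C. \<forall>b\<in>C. a + b \<in> C) \<and> (\<forall>z. \<forall>a\<in>C. sc z a \<in> C)
   \<and> (\<forall>a\<in>C. D a \<in> C) \<and> (\<forall>a\<in>C. \<forall>b\<in>C. D (a + b) = D a + D b)
   \<and> (\<forall>z. \<forall>a\<in>C. D (sc z a) = sc z (D a))
     \<comment> \<open>the lambda-bracket takes values in C[lambda]\<close>
   \<and> (\<forall>a\<in>C. \<forall>b\<in>C. (\<forall>j. lb a b j \<in> C) \<and> finite {j. lb a b j \<noteq> 0})
     \<comment> \<open>bilinearity\<close>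
   \<and> (\<forall>a\<in>C. \<forall>b\<in>C. \<forall>c\<in>C. \<forall>j.
        lb (a + b) c j = lb a c j + lb b c j \<and> lb a (b + c) j = lb a b j + lb a c j)
   \<and> (\<forall>z. \<forall>a\<in>C. \<forall>b\<in>C. \<forall>j. lb (sc z a) b j = sc z (lb a b j) \<and> lb a (sc z b) j = sc z (lb a b j))
     \<comment> \<open>sesquilinearity: [d a_lambda b] = -lambda [a_lambda b]\<close>
   \<and> (\<forall>a\<in>C. \<forall>b\<in>C. lb (D a) b 0 = 0 \<and> (\<forall>j. lb (D a) b (Suc j) = - lb a b j))
     \<comment> \<open>sesquilinearity: [a_lambda d b] = (lambda + d) [a_lambda b]\<close>
   \<and> (\<forall>a\<in>C. \<forall>b\<in>C. lb a (D b) 0 = D (lb a b 0)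
        \<and> (\<forall>j. lb a (D b) (Suc j) = lb a b j + D (lb a b (Suc j))))
     \<comment> \<open>skew-symmetry: [a_lambda b] = - [b_(-lambda-d) a]\<close>
   \<and> (\<forall>a\<in>C. \<forall>b\<in>C. \<forall>j. lb a b j =
        - (\<Sum>i\<in>{i. lb b a i \<noteq> 0}. sc ((-1) ^ i * of_nat (i choose j)) ((D ^^ (i - j)) (lb b a i))))
     \<comment> \<open>Jacobi identity\<close>
   \<and> (\<forall>a\<in>C. \<forall>b\<in>C. \<forall>c\<in>C. \<forall>p q.
        lb a (lb b c q) p = lb b (lb a c p) q
          + (\<Sum>j\<le>p. sc (of_nat ((p + q - j) choose q)) (lb (lb a b j) c (p + q - j))))"

text \<open>A component ('J-part', 'I-part', 'E-coefficient', 'F-coefficient') in g x g x C x C.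
  An element r of R is a finitely supported function with r k m n the component of
  d^k (generator at [m,n]), i.e. r = sum d^k (J_{xJ}[m,n] + I_{xI}[m,n] + xE E[m,n] + xF F[m,n]).
  The quotient by C E[0,0] is realised by requiring the E-coefficient at [0,0] to vanish.\<close>

type_synonym 'a gcomp = "'a \<times> 'a \<times> complex \<times> complex"
type_synonym 'a Relt = "nat \<Rightarrow> nat \<Rightarrow> nat \<Rightarrow> 'a gcomp"

definition cJ :: "'a gcomp \<Rightarrow> 'a" where "cJ x = fst x"
definition cI :: "'a gcomp \<Rightarrow> 'a" where "cI x = fst (snd x)"
definition cE :: "'a gcomp \<Rightarrow> complex" where "cE x = fst (snd (snd x))"
definition cF :: "'a gcomp \<Rightarrow> complex" where "cF x = snd (snd (snd x))"

definition csc :: "(complex \<Rightarrow> 'a \<Rightarrow> 'a) \<Rightarrow> complex \<Rightarrow> 'a gcomp \<Rightarrow> 'a gcomp" where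
  "csc sm z x = (sm z (cJ x), sm z (cI x), z * cE x, z * cF x)"

definition R_carrier :: "('a::zero) Relt set" where
  "R_carrier = {r. finite {(k, m, n). r k m n \<noteq> 0} \<and> (\<forall>k. cE (r k 0 0) = 0)}"

definition R_sc :: "(complex \<Rightarrow> 'a \<Rightarrow> 'a) \<Rightarrow> complex \<Rightarrow> 'a Relt \<Rightarrow> 'a Relt" where
  "R_sc sm z r = (\<lambda>k m n. csc sm z (r k m n))"

definition R_D :: "('a::zero) Relt \<Rightarrow> 'a Relt" where
  "R_D r = (\<lambda>k m n. case k of 0 \<Rightarrow> 0 | Suc k' \<Rightarrow> r k' m n)"

text \<open>Elements of R[lambda] = C[lambda,d] (x) generators: P j k p q is the component of
  lambda^j d^k (generator at [p,q]).\<close>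

definition lmono :: "nat \<Rightarrow> nat \<Rightarrow> nat \<Rightarrow> nat \<Rightarrow> ('a::zero) gcomp \<Rightarrow> nat \<Rightarrow> 'a Relt" where
  "lmono j k p q c = (\<lambda>j' k' p' q'. if j' = j \<and> k' = k \<and> p' = p \<and> q' = q then c else 0)"

text \<open>Multiplication by the monomial c lambda^j0 d^k0.\<close>
definition lshift :: "(complex \<Rightarrow> 'a \<Rightarrow> 'a) \<Rightarrow> complex \<Rightarrow> nat \<Rightarrow> nat \<Rightarrow> (nat \<Rightarrow> ('a::zero) Relt) \<Rightarrow> nat \<Rightarrow> 'a Relt"
  where
  "lshift sm c j0 k0 P = (\<lambda>j k p q. if j0 \<le> j \<and> k0 \<le> k then csc sm c (P (j - j0) (k - k0) p q) else 0)"

text \<open>The brackets with J on the left are as given;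
  those with J on the right are obtained by skew-symmetry:
  [I_a _lambda J_b] = -I_{[b,a]},
  [E[m,n] _lambda J_b[t,s]] = -beta (n t - m s)/(m+n) I_b[m+t-1,n+s-1],
  [F[m,n] _lambda J_b[t,s]] = beta (-lambda - d - (t+s)/(m+n+2) lambda) I_b[m+t,n+s].
  (When m+t = 0 or n+s = 0 the coefficients of the [m+t-1,n+s-1] terms vanish.)\<close>

definition gen_br :: "(complex \<Rightarrow> 'a::ab_group_add \<Rightarrow> 'a) \<Rightarrow> ('a \<Rightarrow> 'a \<Rightarrow> 'a) \<Rightarrow> complex \<Rightarrow>
    'a gcomp \<Rightarrow> nat \<Rightarrow> nat \<Rightarrow> 'a gcomp \<Rightarrow> nat \<Rightarrow> nat \<Rightarrow> nat \<Rightarrow> 'a Relt" where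
  "gen_br sm br \<beta> x m n y t s =
    (let M = (of_nat (m + n) :: complex); T = (of_nat (t + s) :: complex) in
       lmono 0 0 (m + t) (n + s)
         (br (cJ x) (cJ y), br (cJ x) (cI y) - br (cJ y) (cI x), 0, 0)
     + lmono 1 0 (m + t) (n + s)
         (0, sm (- \<beta> * cF y * (1 + M / (T + 2))) (cJ x)
             + sm (\<beta> * cF x * (- 1 - T / (M + 2))) (cJ y), 0, 0)
     + lmono 0 1 (m + t) (n + s)
         (0, sm (- \<beta> * cF y * (M / (T + 2))) (cJ x)
             + sm (- \<beta> * cF x) (cJ y), 0, 0)
     + lmono 0 0 (m + t - 1) (n + s - 1)
         (0, sm (\<beta> * cE y * ((of_nat (s * m) - of_nat (t * n)) / T)) (cJ x)
             - sm (\<beta> * cE x * ((of_nat (n * t) - of_nat (m * s)) / M)) (cJ y), 0, 0))"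

text \<open>The lambda-bracket on R, extended by sesquilinearity and bilinearity:
  [d^K x _lambda d^L y] = (-lambda)^K (lambda+d)^L [x _lambda y]
  with (-lambda)^K (lambda+d)^L = sum_(i<=L) (-1)^K (L choose i) lambda^(K+i) d^(L-i).
  R_br sm br beta a b j is the coefficient of lambda^j.\<close>

definition R_br :: "(complex \<Rightarrow> 'a::ab_group_add \<Rightarrow> 'a) \<Rightarrow> ('a \<Rightarrow> 'a \<Rightarrow> 'a) \<Rightarrow> complex \<Rightarrow>
    'a Relt \<Rightarrow> 'a Relt \<Rightarrow> nat \<Rightarrow> 'a Relt" where
  "R_br sm br \<beta> a b =
    (\<Sum>(K, m, n)\<in>{(K, m, n). a K m n \<noteq> 0}. \<Sum>(L, t, s)\<in>{(L, t, s). b L t s \<noteq> 0}. \<Sum>i\<le>L.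
       lshift sm ((-1) ^ K * of_nat (L choose i)) (K + i) (L - i)
         (gen_br sm br \<beta> (a K m n) m n (b L t s) t s))"

end

theory Submission
  imports Defs
begin

lemma sum_apply: "(sum f A) x = sum (\<lambda>i. f i x) A"
  by (induct A rule: infinite_finite_induct) auto

lemma gcomp_eqI: "cJ x = cJ y \<Longrightarrow> cI x = cI y \<Longrightarrow> cE x = cE y \<Longrightarrow> cF x = cF y \<Longrightarrow> x = y"
  by (cases x; cases y) (simp add: cJ_def cI_def cE_def cF_def)

lemma gcomp_eta[simp]: "(cJ x, cI x, cE x, cF x) = x"
  by (simp add: cJ_def cI_def cE_def cF_def)

lemma c_simps[simp]:
  "cJ (a, b, c, d) = a" "cI (a, b, c, d) = b" "cE (a, b, c, d) = c" "cF (a, b, c, d) = d"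
  "cJ (x + y) = cJ x + cJ y" "cI (x + y) = cI x + cI y" "cE (x + y) = cE x + cE y" "cF (x + y) = cF x + cF y"
  "cJ (x - y) = cJ x - cJ y" "cI (x - y) = cI x - cI y" "cE (x - y) = cE x - cE y" "cF (x - y) = cF x - cF y"
  "cJ (- x) = - cJ x" "cI (- x) = - cI x" "cE (- x) = - cE x" "cF (- x) = - cF x"
  "cJ 0 = 0" "cI 0 = 0" "cE 0 = 0" "cF 0 = 0"
  by (simp_all add: cJ_def cI_def cE_def cF_def)

locale LS =
  fixes sm :: "complex \<Rightarrow> 'a::ab_group_add \<Rightarrow> 'a" and br :: "'a \<Rightarrow> 'a \<Rightarrow> 'a" and \<beta> :: complex
  assumes LA: "complex_lie_algebra sm br"
begin

sublocale V: vector_space sm using LA by (simp add: complex_lie_algebra_def)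

lemma br_addL: "br (x + y) z = br x z + br y z" and br_addR: "br x (y + z) = br x y + br x z"
  and br_smL: "br (sm c x) y = sm c (br x y)" and br_smR: "br x (sm c y) = sm c (br x y)"
  and br_self: "br x x = 0"
  and br_jac: "br x (br y z) + br y (br z x) + br z (br x y) = 0"
  using LA by (simp_all add: complex_lie_algebra_def)

lemma br_0L[simp]: "br 0 y = 0" using br_addL[of 0 0 y] by simp
lemma br_0R[simp]: "br y 0 = 0" using br_addR[of y 0 0] by simp
lemma br_negL: "br (- x) y = - br x y"
proof -
  have "br x y + br (- x) y = 0" using br_addL[of x "-x" y] by simp
  thus ?thesis using minus_unique[of "br x y" "br (- x) y"] by simp
qed
lemma br_negR: "br y (- x) = - br y x"
proof -
  have "br y x + br y (- x) = 0" using br_addR[of y x "-x"] by simp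
  thus ?thesis using minus_unique[of "br y x" "br y (- x)"] by simp
qed
lemma br_diffL: "br (x - y) z = br x z - br y z" 
  using br_addL[of x "- y" z] by (simp add: br_negL)
lemma br_diffR: "br z (x - y) = br z x - br z y"
  using br_addR[of z x "- y"] by (simp add: br_negR)
lemma br_anti: "br y x = - br x y"
proof -
  have "br (x + y) (x + y) = br x x + br x y + (br y x + br y y)" by (simp add: br_addL br_addR)
  hence "br x y + br y x = 0" by (simp add: br_self)
  thus ?thesis using minus_unique[of "br x y" "br y x"] by simp
qed

lemmas br_lin = br_addL br_addR br_smL br_smR br_negL br_negR br_diffL br_diffR

sublocale G: vector_space "csc sm"
  proof
  fix a b :: complex and x y :: "'a gcomp"
  show "csc sm a (x + y) = csc sm a x + csc sm a y"
    by (rule gcomp_eqI) (simp_all add: csc_def V.scale_right_distrib distrib_left)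
  show "csc sm (a + b) x = csc sm a x + csc sm b x"
    by (rule gcomp_eqI) (simp_all add: csc_def V.scale_left_distrib distrib_right)
  show "csc sm a (csc sm b x) = csc sm (a * b) x"
    by (rule gcomp_eqI) (simp_all add: csc_def)
  show "csc sm 1 x = x"
    by (rule gcomp_eqI) (simp_all add: csc_def)
qed

definition wsc :: "complex \<Rightarrow> (nat \<Rightarrow> nat \<Rightarrow> 'a gcomp) \<Rightarrow> (nat \<Rightarrow> nat \<Rightarrow> 'a gcomp)" where
  "wsc z w = (\<lambda>m n. csc sm z (w m n))"

sublocale W: vector_space wsc
  proof
  fix a b :: complex and x y :: "nat \<Rightarrow> nat \<Rightarrow> 'a gcomp"
  show "wsc a (x + y) = wsc a x + wsc a y"
    by (simp add: wsc_def fun_eq_iff G.scale_right_distrib)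
  show "wsc (a + b) x = wsc a x + wsc b x"
    by (simp add: wsc_def fun_eq_iff G.scale_left_distrib)
  show "wsc a (wsc b x) = wsc (a * b) x"
    by (simp add: wsc_def fun_eq_iff)
  show "wsc 1 x = x"
    by (simp add: wsc_def fun_eq_iff)
qed

end

context LS begin

definition dl :: "nat \<Rightarrow> nat \<Rightarrow> 'a gcomp \<Rightarrow> (nat \<Rightarrow> nat \<Rightarrow> 'a gcomp)" where
  "dl i j v = (\<lambda>p q. if p = i \<and> q = j then v else 0)"

definition evR :: "nat \<Rightarrow> 'a Relt \<Rightarrow> complex \<Rightarrow> (nat \<Rightarrow> nat \<Rightarrow> 'a gcomp)" where
  "evR M r z = (\<Sum>k<M. wsc (z ^ k) (r k))"

definition EV2 :: "nat \<Rightarrow> (nat \<Rightarrow> 'a Relt) \<Rightarrow> complex \<Rightarrow> complex \<Rightarrow> (nat \<Rightarrow> nat \<Rightarrow> 'a gcomp)" where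
  "EV2 M P l d = (\<Sum>j<M. wsc (l ^ j) (evR M (P j) d))"

definition gmain :: "'a gcomp \<Rightarrow> nat \<Rightarrow> nat \<Rightarrow> 'a gcomp \<Rightarrow> nat \<Rightarrow> nat \<Rightarrow> complex \<Rightarrow> complex \<Rightarrow> 'a gcomp" where
  "gmain x m n y t s l d =
    (let M = (of_nat (m + n) :: complex); T = (of_nat (t + s) :: complex) in
     (br (cJ x) (cJ y),
      br (cJ x) (cI y) - br (cJ y) (cI x)
      + sm (l * (- \<beta> * cF y * (1 + M / (T + 2))) + d * (- \<beta> * cF y * (M / (T + 2)))) (cJ x)
      + sm (l * (\<beta> * cF x * (- 1 - T / (M + 2))) + d * (- \<beta> * cF x)) (cJ y), 0, 0))"

definition gshift :: "'a gcomp \<Rightarrow> nat \<Rightarrow> nat \<Rightarrow> 'a gcomp \<Rightarrow> nat \<Rightarrow> nat \<Rightarrow> 'a gcomp" where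
  "gshift x m n y t s =
    (let M = (of_nat (m + n) :: complex); T = (of_nat (t + s) :: complex) in
     (0, sm (\<beta> * cE y * ((of_nat (s * m) - of_nat (t * n)) / T)) (cJ x)
         - sm (\<beta> * cE x * ((of_nat (n * t) - of_nat (m * s)) / M)) (cJ y), 0, 0))"

definition genv :: "'a gcomp \<Rightarrow> nat \<Rightarrow> nat \<Rightarrow> 'a gcomp \<Rightarrow> nat \<Rightarrow> nat \<Rightarrow> complex \<Rightarrow> complex \<Rightarrow> (nat \<Rightarrow> nat \<Rightarrow> 'a gcomp)" where
  "genv x m n y t s l d = EV2 2 (gen_br sm br \<beta> x m n y t s) l d"

lemma dl_apply: "dl i j v p q = (if p = i \<and> q = j then v else 0)"
  by (simp add: dl_def)

lemma dl_add: "dl i j a + dl i j b = dl i j (a + b)"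
  by (simp add: dl_def fun_eq_iff)

lemma dl_0[simp]: "dl i j 0 = 0"
  by (simp add: dl_def fun_eq_iff)

lemma dl_neg: "dl i j (- a) = - dl i j a"
  by (simp add: dl_def fun_eq_iff)

lemma wsc_dl: "wsc c (dl i j v) = dl i j (csc sm c v)"
  by (simp add: dl_def fun_eq_iff wsc_def)

lemma lmono_apply: "lmono j0 k0 p0 q0 c j k = (if j = j0 \<and> k = k0 then dl p0 q0 c else 0)"
  by (auto simp add: lmono_def dl_def fun_eq_iff)

lemma sum2: "(\<Sum>j<(2::nat). f j) = f 0 + f 1"
  by (simp add: numeral_2_eq_2)

lemma csc_comb: "(u0, w, 0, 0) + csc sm d (0, sm a p + sm b q, 0, 0) + csc sm l (0, sm e p + sm f q, 0, 0)
   = (u0, w + sm (l * e + d * a) p + sm (l * f + d * b) q, 0, 0)"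
  by (rule gcomp_eqI) (simp_all add: csc_def V.scale_right_distrib V.scale_left_distrib algebra_simps)

lemma genv_eq: "genv x m n y t s l d = dl (m + t) (n + s) (gmain x m n y t s l d) + dl (m + t - 1) (n + s - 1) (gshift x m n y t s)"
proof -
  have A: "genv x m n y t s l d =
     dl (m + t) (n + s) ((br (cJ x) (cJ y), br (cJ x) (cI y) - br (cJ y) (cI x), 0, 0)
        + csc sm d (0, sm (- \<beta> * cF y * (of_nat (m + n) / (of_nat (t + s) + 2))) (cJ x)
             + sm (- \<beta> * cF x) (cJ y), 0, 0)
        + csc sm l (0, sm (- \<beta> * cF y * (1 + of_nat (m + n) / (of_nat (t + s) + 2))) (cJ x)
             + sm (\<beta> * cF x * (- 1 - of_nat (t + s) / (of_nat (m + n) + 2))) (cJ y), 0, 0))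
     + dl (m + t - 1) (n + s - 1) (gshift x m n y t s)"
    unfolding genv_def EV2_def evR_def gen_br_def Let_def
    by (simp add: sum2 lmono_apply wsc_dl dl_add[symmetric] gshift_def Let_def algebra_simps)
  show ?thesis unfolding A csc_comb gmain_def Let_def by (rule refl)
qed

end

context LS begin

lemma gmain_addL: "gmain (x1 + x2) m n y t s l d = gmain x1 m n y t s l d + gmain x2 m n y t s l d"
  by (rule gcomp_eqI) (simp_all add: gmain_def Let_def br_lin V.scale_left_distrib V.scale_right_distrib algebra_simps)
lemma gmain_addR: "gmain x m n (y1 + y2) t s l d = gmain x m n y1 t s l d + gmain x m n y2 t s l d"
  by (rule gcomp_eqI) (simp_all add: gmain_def Let_def br_lin V.scale_left_distrib V.scale_right_distrib algebra_simps)
lemma gmain_scL: "gmain (csc sm c x) m n y t s l d = csc sm c (gmain x m n y t s l d)"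
  by (rule gcomp_eqI) (simp_all add: gmain_def Let_def csc_def br_lin V.scale_left_distrib V.scale_right_distrib algebra_simps)
lemma gmain_scR: "gmain x m n (csc sm c y) t s l d = csc sm c (gmain x m n y t s l d)"
  by (rule gcomp_eqI) (simp_all add: gmain_def Let_def csc_def br_lin V.scale_left_distrib V.scale_right_distrib algebra_simps)
lemma gshift_addL: "gshift (x1 + x2) m n y t s = gshift x1 m n y t s + gshift x2 m n y t s"
  by (rule gcomp_eqI) (simp_all add: gshift_def Let_def br_lin V.scale_left_distrib V.scale_right_distrib algebra_simps add_divide_distrib diff_divide_distrib)
lemma gshift_addR: "gshift x m n (y1 + y2) t s = gshift x m n y1 t s + gshift x m n y2 t s"
  by (rule gcomp_eqI) (simp_all add: gshift_def Let_def br_lin V.scale_left_distrib V.scale_right_distrib algebra_simps add_divide_distrib diff_divide_distrib)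
lemma gshift_scL: "gshift (csc sm c x) m n y t s = csc sm c (gshift x m n y t s)"
  by (rule gcomp_eqI) (simp_all add: gshift_def Let_def csc_def br_lin V.scale_left_distrib V.scale_right_distrib algebra_simps add_divide_distrib diff_divide_distrib)
lemma gshift_scR: "gshift x m n (csc sm c y) t s = csc sm c (gshift x m n y t s)"
  by (rule gcomp_eqI) (simp_all add: gshift_def Let_def csc_def br_lin V.scale_left_distrib V.scale_right_distrib algebra_simps add_divide_distrib diff_divide_distrib)

lemma genv_addL: "genv (x1 + x2) m n y t s l d = genv x1 m n y t s l d + genv x2 m n y t s l d"
  by (simp add: genv_eq gmain_addL gshift_addL dl_add[symmetric] algebra_simps)
lemma genv_addR: "genv x m n (y1 + y2) t s l d = genv x m n y1 t s l d + genv x m n y2 t s l d"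
  by (simp add: genv_eq gmain_addR gshift_addR dl_add[symmetric] algebra_simps)
lemma genv_scL: "genv (csc sm c x) m n y t s l d = wsc c (genv x m n y t s l d)"
  by (simp add: genv_eq gmain_scL gshift_scL wsc_dl W.scale_right_distrib)
lemma genv_scR: "genv x m n (csc sm c y) t s l d = wsc c (genv x m n y t s l d)"
  by (simp add: genv_eq gmain_scR gshift_scR wsc_dl W.scale_right_distrib)

lemma genv_0L[simp]: "genv 0 m n y t s l d = 0"
  using genv_scL[of 0 0 m n y t s l d] by simp
lemma genv_0R[simp]: "genv x m n 0 t s l d = 0"
  using genv_scR[of x m n 0 0 t s l d] by simp

lemma genv_sumL: "genv (\<Sum>i\<in>A. f i) m n y t s l d = (\<Sum>i\<in>A. genv (f i) m n y t s l d)"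
  using additive.sum[OF additive.intro, of "\<lambda>x. genv x m n y t s l d"] genv_addL by blast
lemma genv_sumR: "genv x m n (\<Sum>i\<in>A. f i) t s l d = (\<Sum>i\<in>A. genv x m n (f i) t s l d)"
  using additive.sum[OF additive.intro, of "\<lambda>y. genv x m n y t s l d"] genv_addR by blast

lemma genv_support: "genv x m n y t s l d p q \<noteq> 0 \<Longrightarrow> m + t \<le> p + 1 \<and> n + s \<le> q + 1"
  by (auto simp: genv_eq dl_apply split: if_splits)

definition Gam :: "(nat \<Rightarrow> nat \<Rightarrow> 'a gcomp) \<Rightarrow> (nat \<Rightarrow> nat \<Rightarrow> 'a gcomp) \<Rightarrow> complex \<Rightarrow> complex \<Rightarrow> (nat \<Rightarrow> nat \<Rightarrow> 'a gcomp)" where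
  "Gam u v l d = (\<lambda>p q. \<Sum>m<p+2. \<Sum>n<q+2. \<Sum>t<p+2. \<Sum>s<q+2. genv (u m n) m n (v t s) t s l d p q)"

lemma Gam_addL: "Gam (u1 + u2) v l d = Gam u1 v l d + Gam u2 v l d"
  by (simp add: Gam_def fun_eq_iff genv_addL sum.distrib)
lemma Gam_addR: "Gam u (v1 + v2) l d = Gam u v1 l d + Gam u v2 l d"
  by (simp add: Gam_def fun_eq_iff genv_addR sum.distrib)
lemma Gam_scL: "Gam (wsc c u) v l d = wsc c (Gam u v l d)"
proof -
  have e: "\<And>m n t s p q. genv (wsc c u m n) m n (v t s) t s l d p q = csc sm c (genv (u m n) m n (v t s) t s l d p q)"
    by (simp add: wsc_def genv_scL)
  show ?thesis unfolding Gam_def e G.scale_sum_right[symmetric] by (simp only: wsc_def)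
qed
lemma Gam_scR: "Gam u (wsc c v) l d = wsc c (Gam u v l d)"
proof -
  have e: "\<And>m n t s p q. genv (u m n) m n (wsc c v t s) t s l d p q = csc sm c (genv (u m n) m n (v t s) t s l d p q)"
    by (simp add: wsc_def genv_scR)
  show ?thesis unfolding Gam_def e G.scale_sum_right[symmetric] by (simp only: wsc_def)
qed
lemma Gam_sumL: "Gam (\<Sum>i\<in>A. f i) v l d = (\<Sum>i\<in>A. Gam (f i) v l d)"
  using additive.sum[OF additive.intro, of "\<lambda>x. Gam x v l d"] Gam_addL by blast
lemma Gam_sumR: "Gam u (\<Sum>i\<in>A. f i) l d = (\<Sum>i\<in>A. Gam u (f i) l d)"
  using additive.sum[OF additive.intro, of "\<lambda>x. Gam u x l d"] Gam_addR by blast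
lemma Gam_0L[simp]: "Gam 0 v l d = 0"
  using Gam_scL[of 0 0 v l d] by simp
lemma Gam_0R[simp]: "Gam u 0 l d = 0"
  using Gam_scR[of u 0 0 l d] by simp

lemma sum_if_const: "(\<Sum>x\<in>S. if P then f x else 0) = (if P then (\<Sum>x\<in>S. f x) else 0)"
  by simp

lemma sum4_delta:
  fixes g :: "nat \<Rightarrow> nat \<Rightarrow> nat \<Rightarrow> nat \<Rightarrow> 'b::comm_monoid_add"
  shows "(\<Sum>m\<in>A. \<Sum>n\<in>B. \<Sum>t\<in>C. \<Sum>s\<in>D. if m = i \<and> n = j \<and> t = k \<and> s = r then g m n t s else 0)
    = (if finite A \<and> finite B \<and> finite C \<and> finite D \<and> i \<in> A \<and> j \<in> B \<and> k \<in> C \<and> r \<in> D then g i j k r else 0)"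
proof -
  have e: "\<And>m n t s. (if m = i \<and> n = j \<and> t = k \<and> s = r then g m n t s else 0)
     = (if m = i then (if n = j then (if t = k then (if s = r then g m n t s else 0) else 0) else 0) else 0)"
    by auto
  show ?thesis unfolding e
    by (cases "finite A"; cases "finite B"; cases "finite C"; cases "finite D")
       (simp_all add: sum.delta sum_if_const)
qed

lemma Gam_dl: "Gam (dl i j x) (dl k r y) l d = genv x i j y k r l d"
proof (rule ext, rule ext)
  fix p q
  have e: "\<And>m n t s. genv (dl i j x m n) m n (dl k r y t s) t s l d p q
     = (if m = i \<and> n = j \<and> t = k \<and> s = r then genv x i j y k r l d p q else 0)"
    by (simp add: dl_apply)
  show "Gam (dl i j x) (dl k r y) l d p q = genv x i j y k r l d p q"
  proof (cases "i < p+2 \<and> j < q+2 \<and> k < p+2 \<and> r < q+2")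
    case True thus ?thesis unfolding Gam_def e sum4_delta by simp
  next
    case False
    hence "genv x i j y k r l d p q = 0" using genv_support[of x i j y k r l d p q] by force
    thus ?thesis unfolding Gam_def e sum4_delta by simp
  qed
qed

definition wbnd :: "nat \<Rightarrow> (nat \<Rightarrow> nat \<Rightarrow> 'a gcomp) \<Rightarrow> bool" where
  "wbnd N u \<longleftrightarrow> (\<forall>m n. u m n \<noteq> 0 \<longrightarrow> m < N \<and> n < N)"

lemma sum2_delta:
  fixes g :: "nat \<Rightarrow> nat \<Rightarrow> 'b::comm_monoid_add"
  shows "(\<Sum>m\<in>A. \<Sum>n\<in>B. if p = m \<and> q = n then g m n else 0)
    = (if finite A \<and> finite B \<and> p \<in> A \<and> q \<in> B then g p q else 0)"
proof -
  have e: "\<And>m n. (if p = m \<and> q = n then g m n else 0) = (if m = p then (if n = q then g m n else 0) else 0)"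
    by auto
  show ?thesis unfolding e
    by (cases "finite A"; cases "finite B") (simp_all add: sum.delta sum_if_const)
qed

lemma w_decomp: "wbnd N u \<Longrightarrow> u = (\<Sum>m<N. \<Sum>n<N. dl m n (u m n))"
  by (auto simp: fun_eq_iff sum_apply dl_apply sum2_delta wbnd_def)

lemma Gam_expand: "wbnd N u \<Longrightarrow> wbnd N v \<Longrightarrow>
  Gam u v l d = (\<Sum>m<N. \<Sum>n<N. \<Sum>t<N. \<Sum>s<N. genv (u m n) m n (v t s) t s l d)"
proof -
  assume u: "wbnd N u" and v: "wbnd N v"
  have "Gam u v l d = Gam (\<Sum>m<N. \<Sum>n<N. dl m n (u m n)) (\<Sum>t<N. \<Sum>s<N. dl t s (v t s)) l d"
    using w_decomp[OF u] w_decomp[OF v] by simp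
  also have "\<dots> = (\<Sum>m<N. \<Sum>n<N. \<Sum>t<N. \<Sum>s<N. genv (u m n) m n (v t s) t s l d)"
    by (simp only: Gam_sumL, simp only: Gam_sumR Gam_dl)
  finally show ?thesis .
qed

end

lemma nz2[simp]: "(of_nat k + 2 :: complex) \<noteq> 0"
proof -
  have "(of_nat k + 2 :: complex) = of_nat (k + 2)" by simp
  also have "\<dots> \<noteq> 0" by (simp only: of_nat_eq_0_iff)
  finally show ?thesis .
qed

context LS begin

definition gI :: "'a \<Rightarrow> 'a \<Rightarrow> 'a \<Rightarrow> 'a \<Rightarrow> complex \<Rightarrow> complex \<Rightarrow> 'a" where
  "gI a a' b b' c1 c2 = br a b' - br b a' + sm c1 a + sm c2 b"

definition gS :: "'a \<Rightarrow> 'a \<Rightarrow> complex \<Rightarrow> complex \<Rightarrow> 'a" where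
  "gS a b e1 e2 = sm e1 a - sm e2 b"

lemma cJ_gmain[simp]: "cJ (gmain x m n y t s l d) = br (cJ x) (cJ y)"
  and cE_gmain[simp]: "cE (gmain x m n y t s l d) = 0"
  and cF_gmain[simp]: "cF (gmain x m n y t s l d) = 0"
  by (simp_all add: gmain_def Let_def)

lemma cI_gmain: "cI (gmain x m n y t s l d) = gI (cJ x) (cI x) (cJ y) (cI y)
   (l * (- \<beta> * cF y * (1 + of_nat (m + n) / (of_nat (t + s) + 2))) + d * (- \<beta> * cF y * (of_nat (m + n) / (of_nat (t + s) + 2))))
   (l * (\<beta> * cF x * (- 1 - of_nat (t + s) / (of_nat (m + n) + 2))) + d * (- \<beta> * cF x))"
  by (simp add: gmain_def Let_def gI_def)

lemma cJ_gshift[simp]: "cJ (gshift x m n y t s) = 0"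
  and cE_gshift[simp]: "cE (gshift x m n y t s) = 0"
  and cF_gshift[simp]: "cF (gshift x m n y t s) = 0"
  by (simp_all add: gshift_def Let_def)

lemma cI_gshift: "cI (gshift x m n y t s) = gS (cJ x) (cJ y)
   (\<beta> * cE y * ((of_nat (s * m) - of_nat (t * n)) / of_nat (t + s)))
   (\<beta> * cE x * ((of_nat (n * t) - of_nat (m * s)) / of_nat (m + n)))"
  by (simp add: gshift_def Let_def gS_def)

lemma jac2: "br a (br b c) = br b (br a c) + br (br a b) c"
proof -
  have "br a (br b c) + br b (br c a) + br c (br a b) = 0" by (rule br_jac)
  thus ?thesis by (simp add: br_anti[of c "br a b"] br_anti[of a c] br_negR algebra_simps eq_neg_iff_add_eq_0)
qed

lemma main_abs:
  assumes "z0 = 0" "z0' = 0" "z0'' = 0" "\<alpha> = \<kappa>'' - \<alpha>'" "\<gamma> = \<kappa>' + \<alpha>''" "\<kappa> = \<gamma>' + \<gamma>''"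
  shows "gI a a' (br b c) (gI b b' c c' \<alpha> \<gamma>) z0 \<kappa>
     = gI b b' (br a c) (gI a a' c c' \<alpha>' \<gamma>') z0' \<kappa>' + gI (br a b) (gI a a' b b' \<alpha>'' \<gamma>'') c c' \<kappa>'' z0''"
proof -
  have J1: "br a (br b c') = br b (br a c') + br (br a b) c'" by (rule jac2)
  have J2: "br a (br c b') = br c (br a b') + br (br a c) b'" by (rule jac2)
  have J3: "br (br b c) a' = br b (br c a') - br c (br b a')" using jac2[of b c a'] by (simp add: algebra_simps)
  have A1: "br b a = - br a b" "br c a = - br a c" "br c b = - br b c" by (simp_all add: br_anti[symmetric])
  show ?thesis unfolding gI_def assms
    by (simp add: br_lin J1 J2 J3 A1 V.scale_left_distrib V.scale_right_distrib V.scale_left_diff_distrib algebra_simps)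
qed

lemma shift_abs:
  assumes "e1 = 0" "e1' = 0" "e2'' = 0" "h1 = e1'' - h1'" "h2 = e2' - h1''" "e2 = h2' + h2''"
  shows "gS a (br b c) e1 e2 + br a (gS b c h1 h2)
     = gS b (br a c) e1' e2' + br b (gS a c h1' h2') + gS (br a b) c e1'' e2'' + - br c (gS a b h1'' h2'')"
proof -
  have A1: "br b a = - br a b" "br c a = - br a c" "br c b = - br b c" by (simp_all add: br_anti[symmetric])
  show ?thesis unfolding gS_def assms
    by (simp add: br_lin A1 V.scale_left_distrib V.scale_right_distrib V.scale_left_diff_distrib algebra_simps)
qed

end

context LS begin

lemma scA: "D \<noteq> 0 \<Longrightarrow> M12 = M1 + M2 \<Longrightarrow>
  \<mu> * (- \<beta> * f * (1 + M2 / D)) + (l + d) * (- \<beta> * f * (M2 / D))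
  = (l + \<mu>) * (- \<beta> * f * (1 + M12 / D)) + d * (- \<beta> * f * (M12 / D))
    - (l * (- \<beta> * f * (1 + M1 / D)) + (\<mu> + d) * (- \<beta> * f * (M1 / D)))"
  by (simp add: field_simps)

lemma scG: "D \<noteq> 0 \<Longrightarrow> T13 = M1 + T3 \<Longrightarrow>
  \<mu> * (\<beta> * f * (- 1 - T3 / D)) + (l + d) * (- \<beta> * f)
  = \<mu> * (\<beta> * f * (- 1 - T13 / D)) + d * (- \<beta> * f)
    + (l * (- \<beta> * f * (1 + M1 / D)) + (- l - \<mu>) * (- \<beta> * f * (M1 / D)))"
  by (simp add: field_simps)

lemma scK: "D \<noteq> 0 \<Longrightarrow> T23 = M2 + T3 \<Longrightarrow>
  l * (\<beta> * f * (- 1 - T23 / D)) + d * (- \<beta> * f)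
  = l * (\<beta> * f * (- 1 - T3 / D)) + (\<mu> + d) * (- \<beta> * f)
    + (l * (\<beta> * f * (- 1 - M2 / D)) + (- l - \<mu>) * (- \<beta> * f))"
  by (simp add: field_simps)

lemma MAIN: "gmain x m1 n1 (gmain y m2 n2 z m3 n3 \<mu> (l + d)) (m2 + m3) (n2 + n3) l d
  = gmain y m2 n2 (gmain x m1 n1 z m3 n3 l (\<mu> + d)) (m1 + m3) (n1 + n3) \<mu> d
    + gmain (gmain x m1 n1 y m2 n2 l (- l - \<mu>)) (m1 + m2) (n1 + n2) z m3 n3 (l + \<mu>) d"
proof (rule gcomp_eqI)
  show "cJ (gmain x m1 n1 (gmain y m2 n2 z m3 n3 \<mu> (l + d)) (m2 + m3) (n2 + n3) l d) =
    cJ (gmain y m2 n2 (gmain x m1 n1 z m3 n3 l (\<mu> + d)) (m1 + m3) (n1 + n3) \<mu> d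
    + gmain (gmain x m1 n1 y m2 n2 l (- l - \<mu>)) (m1 + m2) (n1 + n2) z m3 n3 (l + \<mu>) d)"
    by (simp only: cJ_gmain c_simps) (rule jac2)
  show "cI (gmain x m1 n1 (gmain y m2 n2 z m3 n3 \<mu> (l + d)) (m2 + m3) (n2 + n3) l d) =
    cI (gmain y m2 n2 (gmain x m1 n1 z m3 n3 l (\<mu> + d)) (m1 + m3) (n1 + n3) \<mu> d
    + gmain (gmain x m1 n1 y m2 n2 l (- l - \<mu>)) (m1 + m2) (n1 + n2) z m3 n3 (l + \<mu>) d)"
    apply (simp only: c_simps cI_gmain cJ_gmain cF_gmain)
    apply (rule main_abs)
    apply simp
    apply simp
    apply simp
    apply (rule scA, rule nz2, simp)
    apply (rule scG, rule nz2, simp)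
    apply (rule scK, rule nz2, simp)
    done
qed simp_all

lemma scS: "A = B - C \<Longrightarrow> \<beta> * e * (A / X) = \<beta> * e * (B / X) - \<beta> * e * (C / X)"
  by (simp add: diff_divide_distrib right_diff_distrib)
lemma scS2: "A = B + C \<Longrightarrow> \<beta> * e * (A / X) = \<beta> * e * (B / X) + \<beta> * e * (C / X)"
  by (simp add: add_divide_distrib distrib_left)

lemma SHIFT: "gshift x m1 n1 (gmain y m2 n2 z m3 n3 \<mu> (l + d)) (m2 + m3) (n2 + n3)
      + (0, br (cJ x) (cI (gshift y m2 n2 z m3 n3)), 0, 0)
  = gshift y m2 n2 (gmain x m1 n1 z m3 n3 l (\<mu> + d)) (m1 + m3) (n1 + n3)
      + (0, br (cJ y) (cI (gshift x m1 n1 z m3 n3)), 0, 0)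
    + gshift (gmain x m1 n1 y m2 n2 l (- l - \<mu>)) (m1 + m2) (n1 + n2) z m3 n3
      + (0, - br (cJ z) (cI (gshift x m1 n1 y m2 n2)), 0, 0)"
proof (rule gcomp_eqI)
  show "cI (gshift x m1 n1 (gmain y m2 n2 z m3 n3 \<mu> (l + d)) (m2 + m3) (n2 + n3)
      + (0, br (cJ x) (cI (gshift y m2 n2 z m3 n3)), 0, 0)) =
    cI (gshift y m2 n2 (gmain x m1 n1 z m3 n3 l (\<mu> + d)) (m1 + m3) (n1 + n3)
      + (0, br (cJ y) (cI (gshift x m1 n1 z m3 n3)), 0, 0)
    + gshift (gmain x m1 n1 y m2 n2 l (- l - \<mu>)) (m1 + m2) (n1 + n2) z m3 n3
      + (0, - br (cJ z) (cI (gshift x m1 n1 y m2 n2)), 0, 0))"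
    apply (simp only: c_simps cI_gshift cJ_gmain cE_gmain)
    apply (rule shift_abs)
    apply simp
    apply simp
    apply simp
    apply (rule scS, simp add: algebra_simps)
    apply (rule scS, simp add: algebra_simps)
    apply (rule scS2, simp add: algebra_simps)
    done
qed simp_all

end

lemma zero_gcomp: "((0::'a::zero), (0::'a), (0::complex), (0::complex)) = 0"
  by (simp add: zero_prod_def)

lemma sum4_swap:
  "(\<Sum>m\<in>A. \<Sum>n\<in>B. \<Sum>t\<in>C. \<Sum>s\<in>D. f m n t s) = (\<Sum>t\<in>C. \<Sum>s\<in>D. \<Sum>m\<in>A. \<Sum>n\<in>B. f m n t s)"
proof -
  have "(\<Sum>m\<in>A. \<Sum>n\<in>B. \<Sum>t\<in>C. \<Sum>s\<in>D. f m n t s) = (\<Sum>m\<in>A. \<Sum>t\<in>C. \<Sum>n\<in>B. \<Sum>s\<in>D. f m n t s)"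
    by (rule sum.cong[OF refl], rule sum.swap)
  also have "\<dots> = (\<Sum>t\<in>C. \<Sum>m\<in>A. \<Sum>n\<in>B. \<Sum>s\<in>D. f m n t s)"
    by (rule sum.swap)
  also have "\<dots> = (\<Sum>t\<in>C. \<Sum>m\<in>A. \<Sum>s\<in>D. \<Sum>n\<in>B. f m n t s)"
    by (rule sum.cong[OF refl], rule sum.cong[OF refl], rule sum.swap)
  also have "\<dots> = (\<Sum>t\<in>C. \<Sum>s\<in>D. \<Sum>m\<in>A. \<Sum>n\<in>B. f m n t s)"
    by (rule sum.cong[OF refl], rule sum.swap)
  finally show ?thesis .
qed

context LS begin

lemma F1: "cJ w = 0 \<Longrightarrow> cE w = 0 \<Longrightarrow> gshift x m n w t s = 0"
  by (simp add: gshift_def Let_def zero_gcomp)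
lemma F2: "cJ w = 0 \<Longrightarrow> cF w = 0 \<Longrightarrow> gmain x m n w t s l d = (0, br (cJ x) (cI w), 0, 0)"
  by (simp add: gmain_def Let_def)
lemma F3: "cJ w = 0 \<Longrightarrow> cF w = 0 \<Longrightarrow> gmain w m n z t s l d = (0, - br (cJ z) (cI w), 0, 0)"
  by (simp add: gmain_def Let_def)
lemma F4: "cJ w = 0 \<Longrightarrow> cE w = 0 \<Longrightarrow> gshift w m n z t s = 0"
  by (simp add: gshift_def Let_def zero_gcomp)
lemma Fidx: "m2 + m3 = 0 \<or> n2 + n3 = 0 \<Longrightarrow> gshift y m2 n2 z m3 n3 = 0"
  by (auto simp: gshift_def Let_def zero_gcomp)

lemma IDX1: "dl (m1 + (m2 + m3 - 1)) (n1 + (n2 + n3 - 1)) (0, br (cJ x) (cI (gshift y m2 n2 z m3 n3)), 0, 0)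
  = dl (m1 + m2 + m3 - 1) (n1 + n2 + n3 - 1) (0, br (cJ x) (cI (gshift y m2 n2 z m3 n3)), 0, 0)"
proof (cases "m2 + m3 = 0 \<or> n2 + n3 = 0")
  case True thus ?thesis using Fidx[OF True] by (simp add: zero_gcomp)
next
  case False
  hence "m1 + (m2 + m3 - 1) = m1 + m2 + m3 - 1" "n1 + (n2 + n3 - 1) = n1 + n2 + n3 - 1" by auto
  thus ?thesis by simp
qed

lemma IDX2: "dl (m1 + m2 - 1 + m3) (n1 + n2 - 1 + n3) (0, - br (cJ z) (cI (gshift x m1 n1 y m2 n2)), 0, 0)
  = dl (m1 + m2 + m3 - 1) (n1 + n2 + n3 - 1) (0, - br (cJ z) (cI (gshift x m1 n1 y m2 n2)), 0, 0)"
proof (cases "m1 + m2 = 0 \<or> n1 + n2 = 0")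
  case True thus ?thesis using Fidx[OF True] by (simp add: zero_gcomp)
next
  case False
  hence "m1 + m2 - 1 + m3 = m1 + m2 + m3 - 1" "n1 + n2 - 1 + n3 = n1 + n2 + n3 - 1" by auto
  thus ?thesis by simp
qed

lemma JL: "Gam (dl m1 n1 x) (Gam (dl m2 n2 y) (dl m3 n3 z) \<mu> (l + d)) l d
  = dl (m1 + m2 + m3) (n1 + n2 + n3) (gmain x m1 n1 (gmain y m2 n2 z m3 n3 \<mu> (l + d)) (m2 + m3) (n2 + n3) l d)
  + dl (m1 + m2 + m3 - 1) (n1 + n2 + n3 - 1) (gshift x m1 n1 (gmain y m2 n2 z m3 n3 \<mu> (l + d)) (m2 + m3) (n2 + n3)
      + (0, br (cJ x) (cI (gshift y m2 n2 z m3 n3)), 0, 0))"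
proof -
  have "Gam (dl m1 n1 x) (Gam (dl m2 n2 y) (dl m3 n3 z) \<mu> (l + d)) l d
    = genv x m1 n1 (gmain y m2 n2 z m3 n3 \<mu> (l + d)) (m2 + m3) (n2 + n3) l d
      + genv x m1 n1 (gshift y m2 n2 z m3 n3) (m2 + m3 - 1) (n2 + n3 - 1) l d"
    by (simp only: Gam_dl genv_eq Gam_addR)
  also have "\<dots> = dl (m1 + m2 + m3) (n1 + n2 + n3) (gmain x m1 n1 (gmain y m2 n2 z m3 n3 \<mu> (l + d)) (m2 + m3) (n2 + n3) l d)
      + dl (m1 + m2 + m3 - 1) (n1 + n2 + n3 - 1) (gshift x m1 n1 (gmain y m2 n2 z m3 n3 \<mu> (l + d)) (m2 + m3) (n2 + n3))
      + dl (m1 + m2 + m3 - 1) (n1 + n2 + n3 - 1) (0, br (cJ x) (cI (gshift y m2 n2 z m3 n3)), 0, 0)"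
    unfolding genv_eq IDX1[symmetric] by (simp add: F1 F2 add.assoc)
  finally show ?thesis by (simp add: dl_add[symmetric] add.assoc)
qed

lemma JR2: "Gam (Gam (dl m1 n1 x) (dl m2 n2 y) l (- l - \<mu>)) (dl m3 n3 z) (l + \<mu>) d
  = dl (m1 + m2 + m3) (n1 + n2 + n3) (gmain (gmain x m1 n1 y m2 n2 l (- l - \<mu>)) (m1 + m2) (n1 + n2) z m3 n3 (l + \<mu>) d)
  + dl (m1 + m2 + m3 - 1) (n1 + n2 + n3 - 1) (gshift (gmain x m1 n1 y m2 n2 l (- l - \<mu>)) (m1 + m2) (n1 + n2) z m3 n3
      + (0, - br (cJ z) (cI (gshift x m1 n1 y m2 n2)), 0, 0))"
proof -
  have "Gam (Gam (dl m1 n1 x) (dl m2 n2 y) l (- l - \<mu>)) (dl m3 n3 z) (l + \<mu>) d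
    = genv (gmain x m1 n1 y m2 n2 l (- l - \<mu>)) (m1 + m2) (n1 + n2) z m3 n3 (l + \<mu>) d
      + genv (gshift x m1 n1 y m2 n2) (m1 + m2 - 1) (n1 + n2 - 1) z m3 n3 (l + \<mu>) d"
    by (simp only: Gam_dl genv_eq Gam_addL)
  also have "\<dots> = dl (m1 + m2 + m3) (n1 + n2 + n3) (gmain (gmain x m1 n1 y m2 n2 l (- l - \<mu>)) (m1 + m2) (n1 + n2) z m3 n3 (l + \<mu>) d)
      + dl (m1 + m2 + m3 - 1) (n1 + n2 + n3 - 1) (gshift (gmain x m1 n1 y m2 n2 l (- l - \<mu>)) (m1 + m2) (n1 + n2) z m3 n3)
      + dl (m1 + m2 + m3 - 1) (n1 + n2 + n3 - 1) (0, - br (cJ z) (cI (gshift x m1 n1 y m2 n2)), 0, 0)"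
    unfolding genv_eq IDX2[symmetric] by (simp add: F3 F4 add.assoc)
  finally show ?thesis by (simp add: dl_add[symmetric] add.assoc)
qed

lemma JAC_dl: "Gam (dl m1 n1 x) (Gam (dl m2 n2 y) (dl m3 n3 z) \<mu> (l + d)) l d
  = Gam (dl m2 n2 y) (Gam (dl m1 n1 x) (dl m3 n3 z) l (\<mu> + d)) \<mu> d
  + Gam (Gam (dl m1 n1 x) (dl m2 n2 y) l (- l - \<mu>)) (dl m3 n3 z) (l + \<mu>) d"
proof -
  have e1: "m2 + m1 + m3 = m1 + m2 + m3" "n2 + n1 + n3 = n1 + n2 + n3" by simp_all
  show ?thesis
    unfolding JL JR2 JL[of m2 n2 y m1 n1 x m3 n3 z l \<mu> d] e1 MAIN[of x m1 n1 y m2 n2 z m3 n3 \<mu> l d]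
      SHIFT[of x m1 n1 y m2 n2 z m3 n3 \<mu> l d]
    by (simp add: dl_add[symmetric] add_ac)
qed

end

context LS begin

lemma skew_abs: "c1 = - c4 \<Longrightarrow> c2 = - c3 \<Longrightarrow> gI a a' b b' c1 c2 = - gI b b' a a' c3 c4"
  by (simp add: gI_def algebra_simps)

lemma sk1: "D \<noteq> 0 \<Longrightarrow> l * (- \<beta> * f * (1 + M / D)) + d * (- \<beta> * f * (M / D)) = - ((- l - d) * (\<beta> * f * (- 1 - M / D)) + d * (- \<beta> * f))"
  by (simp add: field_simps)
lemma sk2: "D \<noteq> 0 \<Longrightarrow> l * (\<beta> * f * (- 1 - T / D)) + d * (- \<beta> * f) = - ((- l - d) * (- \<beta> * f * (1 + T / D)) + d * (- \<beta> * f * (T / D)))"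
  by (simp add: field_simps)

lemma gmain_skew: "gmain x m n y t s l d = - gmain y t s x m n (- l - d) d"
proof (rule gcomp_eqI)
  show "cI (gmain x m n y t s l d) = cI (- gmain y t s x m n (- l - d) d)"
    apply (simp only: c_simps cI_gmain)
    apply (rule skew_abs)
     apply (rule sk1, rule nz2)
    apply (rule sk2, rule nz2)
    done
qed (simp_all add: br_anti[of "cJ x" "cJ y"])

lemma gshift_skew: "gshift x m n y t s = - gshift y t s x m n"
  by (rule gcomp_eqI) (simp_all add: gshift_def Let_def mult.commute)

lemma genv_skew: "genv x m n y t s l d = - genv y t s x m n (- l - d) d"
  unfolding genv_eq gmain_skew[of x m n y t s l d] gshift_skew[of x m n y t s]
  by (simp add: dl_neg add.commute)

definition dlp :: "nat \<times> nat \<Rightarrow> (nat \<Rightarrow> nat \<Rightarrow> 'a gcomp) \<Rightarrow> (nat \<Rightarrow> nat \<Rightarrow> 'a gcomp)" where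
  "dlp p u = dl (fst p) (snd p) (u (fst p) (snd p))"

lemma w_decompB: "wbnd N u \<Longrightarrow> u = (\<Sum>p\<in>{..<N} \<times> {..<N}. dlp p u)"
proof -
  assume "wbnd N u"
  hence "u = (\<Sum>m<N. \<Sum>n<N. dl m n (u m n))" by (rule w_decomp)
  also have "\<dots> = (\<Sum>p\<in>{..<N} \<times> {..<N}. dlp p u)"
    unfolding dlp_def by (simp add: sum.cartesian_product split_def)
  finally show ?thesis .
qed

lemma JAC_dlp: "Gam (dlp p1 u) (Gam (dlp p2 v) (dlp p3 w) \<mu> (l + d)) l d
  = Gam (dlp p2 v) (Gam (dlp p1 u) (dlp p3 w) l (\<mu> + d)) \<mu> d
  + Gam (Gam (dlp p1 u) (dlp p2 v) l (- l - \<mu>)) (dlp p3 w) (l + \<mu>) d"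
  unfolding dlp_def by (rule JAC_dl)

lemma JAC_Gam:
  assumes u: "wbnd N u" and v: "wbnd N v" and w: "wbnd N w"
  shows "Gam u (Gam v w \<mu> (l + d)) l d = Gam v (Gam u w l (\<mu> + d)) \<mu> d + Gam (Gam u v l (- l - \<mu>)) w (l + \<mu>) d"
proof -
  let ?B = "{..<N} \<times> {..<N}"
  have L: "Gam u (Gam v w \<mu> (l + d)) l d = (\<Sum>p1\<in>?B. \<Sum>p2\<in>?B. \<Sum>p3\<in>?B. Gam (dlp p1 u) (Gam (dlp p2 v) (dlp p3 w) \<mu> (l + d)) l d)"
    apply (subst w_decompB[OF u], subst w_decompB[OF v], subst w_decompB[OF w])
    apply (unfold Gam_sumL)
    apply (unfold Gam_sumR)
    apply (rule refl)
    done
  have R1: "Gam v (Gam u w l (\<mu> + d)) \<mu> d = (\<Sum>p2\<in>?B. \<Sum>p1\<in>?B. \<Sum>p3\<in>?B. Gam (dlp p2 v) (Gam (dlp p1 u) (dlp p3 w) l (\<mu> + d)) \<mu> d)"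
    apply (subst w_decompB[OF u], subst w_decompB[OF v], subst w_decompB[OF w])
    apply (unfold Gam_sumL)
    apply (unfold Gam_sumR)
    apply (rule refl)
    done
  have R2a: "Gam (Gam u v l (- l - \<mu>)) w (l + \<mu>) d = (\<Sum>p3\<in>?B. \<Sum>p2\<in>?B. \<Sum>p1\<in>?B. Gam (Gam (dlp p1 u) (dlp p2 v) l (- l - \<mu>)) (dlp p3 w) (l + \<mu>) d)"
    apply (subst w_decompB[OF u], subst w_decompB[OF v], subst w_decompB[OF w])
    apply (simp only: Gam_sumL Gam_sumR)
    done
  have R2: "Gam (Gam u v l (- l - \<mu>)) w (l + \<mu>) d = (\<Sum>p1\<in>?B. \<Sum>p2\<in>?B. \<Sum>p3\<in>?B. Gam (Gam (dlp p1 u) (dlp p2 v) l (- l - \<mu>)) (dlp p3 w) (l + \<mu>) d)"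
  proof -
    have "(\<Sum>p3\<in>?B. \<Sum>p2\<in>?B. \<Sum>p1\<in>?B. Gam (Gam (dlp p1 u) (dlp p2 v) l (- l - \<mu>)) (dlp p3 w) (l + \<mu>) d)
      = (\<Sum>p3\<in>?B. \<Sum>p1\<in>?B. \<Sum>p2\<in>?B. Gam (Gam (dlp p1 u) (dlp p2 v) l (- l - \<mu>)) (dlp p3 w) (l + \<mu>) d)"
      by (rule sum.cong[OF refl], rule sum.swap)
    also have "\<dots> = (\<Sum>p1\<in>?B. \<Sum>p3\<in>?B. \<Sum>p2\<in>?B. Gam (Gam (dlp p1 u) (dlp p2 v) l (- l - \<mu>)) (dlp p3 w) (l + \<mu>) d)"
      by (rule sum.swap)
    also have "\<dots> = (\<Sum>p1\<in>?B. \<Sum>p2\<in>?B. \<Sum>p3\<in>?B. Gam (Gam (dlp p1 u) (dlp p2 v) l (- l - \<mu>)) (dlp p3 w) (l + \<mu>) d)"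
      by (rule sum.cong[OF refl], rule sum.swap)
    finally show ?thesis using R2a by simp
  qed
  have R1': "Gam v (Gam u w l (\<mu> + d)) \<mu> d = (\<Sum>p1\<in>?B. \<Sum>p2\<in>?B. \<Sum>p3\<in>?B. Gam (dlp p2 v) (Gam (dlp p1 u) (dlp p3 w) l (\<mu> + d)) \<mu> d)"
    unfolding R1 by (rule sum.swap)
  have "Gam u (Gam v w \<mu> (l + d)) l d = (\<Sum>p1\<in>?B. \<Sum>p2\<in>?B. \<Sum>p3\<in>?B.
      Gam (dlp p2 v) (Gam (dlp p1 u) (dlp p3 w) l (\<mu> + d)) \<mu> d
    + Gam (Gam (dlp p1 u) (dlp p2 v) l (- l - \<mu>)) (dlp p3 w) (l + \<mu>) d)"
    unfolding L by (intro sum.cong refl, rule JAC_dlp)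
  also have "\<dots> = Gam v (Gam u w l (\<mu> + d)) \<mu> d + Gam (Gam u v l (- l - \<mu>)) w (l + \<mu>) d"
    unfolding R1' R2 by (simp only: sum.distrib)
  finally show ?thesis .
qed

lemma Gam_expandB: "wbnd N u \<Longrightarrow> wbnd N v \<Longrightarrow>
  Gam u v l d = (\<Sum>p1\<in>{..<N} \<times> {..<N}. \<Sum>p2\<in>{..<N} \<times> {..<N}. Gam (dlp p1 u) (dlp p2 v) l d)"
  apply (subst (1) w_decompB[of N u], assumption, subst (1) w_decompB[of N v], assumption)
  apply (unfold Gam_sumL)
  apply (unfold Gam_sumR)
  apply (rule refl)
  done

lemma SKEW_Gam:
  assumes u: "wbnd N u" and v: "wbnd N v"
  shows "Gam u v l d = - Gam v u (- l - d) d"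
proof -
  have "Gam v u (- l - d) d = (\<Sum>p2\<in>{..<N} \<times> {..<N}. \<Sum>p1\<in>{..<N} \<times> {..<N}. Gam (dlp p2 v) (dlp p1 u) (- l - d) d)"
    by (rule Gam_expandB[OF v u])
  also have "\<dots> = (\<Sum>p1\<in>{..<N} \<times> {..<N}. \<Sum>p2\<in>{..<N} \<times> {..<N}. Gam (dlp p2 v) (dlp p1 u) (- l - d) d)"
    by (rule sum.swap)
  also have "\<dots> = - Gam u v l d"
    unfolding Gam_expandB[OF u v] dlp_def Gam_dl
    by (simp add: genv_skew[of _ _ _ _ _ _ l d] sum_negf)
  finally show ?thesis by simp
qed

end

context LS begin

definition bndR :: "nat \<Rightarrow> 'a Relt \<Rightarrow> bool" where
  "bndR N r \<longleftrightarrow> (\<forall>k m n. r k m n \<noteq> 0 \<longrightarrow> k < N \<and> m < N \<and> n < N)"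

lemma lmono_0[simp]: "lmono j k p q 0 = 0"
  by (simp add: lmono_def fun_eq_iff)

lemma gen_br_0L[simp]: "gen_br sm br \<beta> 0 m n y t s = 0"
  by (simp add: gen_br_def Let_def zero_gcomp)
lemma gen_br_0R[simp]: "gen_br sm br \<beta> x m n 0 t s = 0"
  by (simp add: gen_br_def Let_def zero_gcomp)
lemma lshift_0[simp]: "lshift sm c j0 k0 0 = 0"
  by (simp add: lshift_def fun_eq_iff)

abbreviation Bx :: "nat \<Rightarrow> (nat \<times> nat \<times> nat) set" where "Bx N \<equiv> {..<N} \<times> {..<N} \<times> {..<N}"

lemma supp_sub: "bndR N a \<Longrightarrow> {(K, m, n). a K m n \<noteq> 0} \<subseteq> Bx N"
  by (auto simp: bndR_def)

lemma R_br_box: assumes a: "bndR N a" and b: "bndR N b"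
  shows "R_br sm br \<beta> a b = (\<Sum>(K, m, n)\<in>Bx N. \<Sum>(L, t, s)\<in>Bx N. \<Sum>i\<le>L.
       lshift sm ((-1) ^ K * of_nat (L choose i)) (K + i) (L - i) (gen_br sm br \<beta> (a K m n) m n (b L t s) t s))"
proof -
  have fin: "finite (Bx N)" by simp
  have inner: "\<And>K m n. (\<Sum>(L, t, s)\<in>{(L, t, s). b L t s \<noteq> 0}. \<Sum>i\<le>L.
       lshift sm ((-1) ^ K * of_nat (L choose i)) (K + i) (L - i) (gen_br sm br \<beta> (a K m n) m n (b L t s) t s))
     = (\<Sum>(L, t, s)\<in>Bx N. \<Sum>i\<le>L.
       lshift sm ((-1) ^ K * of_nat (L choose i)) (K + i) (L - i) (gen_br sm br \<beta> (a K m n) m n (b L t s) t s))"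
    by (rule sum.mono_neutral_left[OF fin supp_sub[OF b]]) auto
  show ?thesis unfolding R_br_def inner
    by (rule sum.mono_neutral_left[OF fin supp_sub[OF a]]) auto
qed

lemma evR_add: "evR M (r1 + r2) z = evR M r1 z + evR M r2 z"
  by (simp add: evR_def W.scale_right_distrib sum.distrib)
lemma EV2_add: "EV2 M (P1 + P2) l d = EV2 M P1 l d + EV2 M P2 l d"
  by (simp add: EV2_def evR_add W.scale_right_distrib sum.distrib)
lemma EV2_sum: "EV2 M (\<Sum>i\<in>A. f i) l d = (\<Sum>i\<in>A. EV2 M (f i) l d)"
  using additive.sum[OF additive.intro, of "\<lambda>P. EV2 M P l d"] EV2_add by blast

lemma shift_sum:
  fixes g :: "nat \<Rightarrow> nat \<Rightarrow> nat \<Rightarrow> 'a gcomp"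
  assumes M: "k0 + 2 \<le> M" and g: "\<And>k. 2 \<le> k \<Longrightarrow> g k = 0"
  shows "(\<Sum>k<M. wsc (z ^ k) (if k0 \<le> k then g (k - k0) else 0)) = wsc (z ^ k0) (\<Sum>k<2. wsc (z ^ k) (g k))"
proof -
  have e: "\<And>k. wsc (z ^ k) (if k0 \<le> k then g (k - k0) else 0)
     = (if k = k0 then wsc (z ^ k0) (g 0) else 0) + (if k = Suc k0 then wsc (z ^ Suc k0) (g 1) else 0)"
  proof -
    fix k
    show "wsc (z ^ k) (if k0 \<le> k then g (k - k0) else 0)
     = (if k = k0 then wsc (z ^ k0) (g 0) else 0) + (if k = Suc k0 then wsc (z ^ Suc k0) (g 1) else 0)"
    proof (cases "k0 \<le> k")
      case True
      then consider "k = k0" | "k = Suc k0" | "2 \<le> k - k0" by linarith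
      thus ?thesis using True g[of "k - k0"] by cases auto
    qed auto
  qed
  have "k0 \<in> {..<M}" "Suc k0 \<in> {..<M}" using M by auto
  hence "(\<Sum>k<M. wsc (z ^ k) (if k0 \<le> k then g (k - k0) else 0)) = wsc (z ^ k0) (g 0) + wsc (z ^ Suc k0) (g 1)"
    unfolding e sum.distrib by (simp add: sum.delta)
  also have "\<dots> = wsc (z ^ k0) (\<Sum>k<2. wsc (z ^ k) (g k))"
    by (simp add: sum2 W.scale_right_distrib mult.commute)
  finally show ?thesis .
qed

lemma lshift_apply: "lshift sm c j0 k0 G j k = (if j0 \<le> j \<and> k0 \<le> k then wsc c (G (j - j0) (k - k0)) else 0)"
  by (auto simp add: lshift_def wsc_def fun_eq_iff)

lemma EV2_lshift:
  assumes J: "j0 + 2 \<le> M" and K: "k0 + 2 \<le> M" and G: "\<And>j k. 2 \<le> j \<or> 2 \<le> k \<Longrightarrow> G j k = 0"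
  shows "EV2 M (lshift sm c j0 k0 G) l d = wsc (c * l ^ j0 * d ^ k0) (EV2 2 G l d)"
proof -
  have e1: "\<And>j. evR M (lshift sm c j0 k0 G j) d = (if j0 \<le> j then wsc (c * d ^ k0) (evR 2 (G (j - j0)) d) else 0)"
  proof -
    fix j
    show "evR M (lshift sm c j0 k0 G j) d = (if j0 \<le> j then wsc (c * d ^ k0) (evR 2 (G (j - j0)) d) else 0)"
    proof (cases "j0 \<le> j")
      case True
      have "evR M (lshift sm c j0 k0 G j) d = (\<Sum>k<M. wsc (d ^ k) (if k0 \<le> k then wsc c (G (j - j0) (k - k0)) else 0))"
        unfolding evR_def lshift_apply using True by simp
      also have "\<dots> = wsc (d ^ k0) (\<Sum>k<2. wsc (d ^ k) (wsc c (G (j - j0) k)))"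
        by (rule shift_sum[OF K]) (simp add: G wsc_def zero_fun_def)
      also have "\<dots> = wsc (c * d ^ k0) (evR 2 (G (j - j0)) d)"
        by (simp add: evR_def W.scale_sum_right mult.commute mult.left_commute)
      finally show ?thesis using True by simp
    qed (simp add: evR_def lshift_apply)
  qed
  have "EV2 M (lshift sm c j0 k0 G) l d = (\<Sum>j<M. wsc (l ^ j) (if j0 \<le> j then wsc (c * d ^ k0) (evR 2 (G (j - j0)) d) else 0))"
    unfolding EV2_def e1 ..
  also have "\<dots> = wsc (l ^ j0) (\<Sum>j<2. wsc (l ^ j) (wsc (c * d ^ k0) (evR 2 (G j) d)))"
  proof (rule shift_sum[OF J])
    fix j :: nat assume j: "2 \<le> j"
    have "G j = 0"
    proof
      fix k show "G j k = 0 k" using G[of j k] j by simp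
    qed
    thus "wsc (c * d ^ k0) (evR 2 (G j) d) = 0" by (simp add: evR_def)
  qed
  also have "\<dots> = wsc (c * l ^ j0 * d ^ k0) (EV2 2 G l d)"
    by (simp add: EV2_def W.scale_sum_right mult.commute mult.left_commute)
  finally show ?thesis .
qed

lemma gen_br_supp: "2 \<le> j \<or> 2 \<le> k \<Longrightarrow> gen_br sm br \<beta> x m n y t s j k = 0"
  by (auto simp: gen_br_def Let_def lmono_apply)

lemma binom_W: "(\<Sum>i\<le>L. wsc ((-1) ^ K * of_nat (L choose i) * l ^ (K + i) * d ^ (L - i)) X) = wsc ((- l) ^ K * (l + d) ^ L) X"
proof -
  have "(- l) ^ K * (l + d) ^ L = (\<Sum>i\<le>L. (-1) ^ K * of_nat (L choose i) * l ^ (K + i) * d ^ (L - i))"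
    unfolding binomial_ring[of l d L] sum_distrib_left power_minus[of l K]
    by (rule sum.cong) (simp_all add: power_add algebra_simps)
  thus ?thesis by (simp add: W.scale_sum_left)
qed

end

context LS begin

lemma sum_box: "(\<Sum>(K, m, n)\<in>A \<times> B. F K m n) = (\<Sum>K\<in>A. \<Sum>p\<in>B. F K (fst p) (snd p))"
  by (simp add: sum.cartesian_product split_def)

lemma bndR_wbnd: "bndR N a \<Longrightarrow> wbnd N (a K)"
  by (auto simp: bndR_def wbnd_def)

lemma EVAL:
  assumes a: "bndR N a" and b: "bndR N b" and M: "2 * N \<le> M"
  shows "EV2 M (R_br sm br \<beta> a b) l d = Gam (evR N a (- l)) (evR N b (l + d)) l d"
proof -
  let ?B = "{..<N} \<times> {..<N}"
  let ?g = "\<lambda>K p L q. genv (a K (fst p) (snd p)) (fst p) (snd p) (b L (fst q) (snd q)) (fst q) (snd q) l d"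
  have "EV2 M (R_br sm br \<beta> a b) l d = (\<Sum>K<N. \<Sum>p\<in>?B. \<Sum>L<N. \<Sum>q\<in>?B. \<Sum>i\<le>L.
      EV2 M (lshift sm ((-1) ^ K * of_nat (L choose i)) (K + i) (L - i)
        (gen_br sm br \<beta> (a K (fst p) (snd p)) (fst p) (snd p) (b L (fst q) (snd q)) (fst q) (snd q))) l d)"
    unfolding R_br_box[OF a b] sum_box EV2_sum ..
  also have "\<dots> = (\<Sum>K<N. \<Sum>p\<in>?B. \<Sum>L<N. \<Sum>q\<in>?B. \<Sum>i\<le>L.
      wsc ((-1) ^ K * of_nat (L choose i) * l ^ (K + i) * d ^ (L - i)) (?g K p L q))"
  proof (intro sum.cong refl)
    fix K L i p q assume K: "K \<in> {..<N}" and L: "L \<in> {..<N}" and i: "i \<in> {..L}"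
    show "EV2 M (lshift sm ((-1) ^ K * of_nat (L choose i)) (K + i) (L - i)
        (gen_br sm br \<beta> (a K (fst p) (snd p)) (fst p) (snd p) (b L (fst q) (snd q)) (fst q) (snd q))) l d
      = wsc ((-1) ^ K * of_nat (L choose i) * l ^ (K + i) * d ^ (L - i)) (?g K p L q)"
      unfolding genv_def
      by (rule EV2_lshift) (use K L i M in \<open>auto intro: gen_br_supp\<close>)
  qed
  also have "\<dots> = (\<Sum>K<N. \<Sum>p\<in>?B. \<Sum>L<N. \<Sum>q\<in>?B. wsc ((- l) ^ K * (l + d) ^ L) (?g K p L q))"
    unfolding binom_W ..
  also have "\<dots> = (\<Sum>K<N. \<Sum>L<N. \<Sum>p\<in>?B. \<Sum>q\<in>?B. wsc ((- l) ^ K * (l + d) ^ L) (?g K p L q))"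
    by (rule sum.cong[OF refl], rule sum.swap)
  also have "\<dots> = Gam (evR N a (- l)) (evR N b (l + d)) l d"
    unfolding evR_def Gam_sumL Gam_scL Gam_sumR Gam_scR
      Gam_expandB[OF bndR_wbnd[OF a] bndR_wbnd[OF b]] dlp_def Gam_dl W.scale_sum_right W.scale_scale
    apply (simp add: mult.commute)
    apply (rule sum.swap)
    done
  finally show ?thesis .
qed

end

context LS begin

lemma pow2_neq: "p < M \<Longrightarrow> (2::complex) ^ p \<noteq> 2 ^ M"
proof
  assume p: "p < M" and e: "(2::complex) ^ p = 2 ^ M"
  have "(of_nat (2 ^ p) :: complex) = of_nat (2 ^ M)" using e by simp
  hence "(2::nat) ^ p = 2 ^ M" by (simp only: of_nat_eq_iff)
  hence "p = M" by simp
  thus False using p by simp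
qed

lemma W_coeff: "(\<And>x. (\<Sum>p<M. wsc (x ^ p) (c p)) = 0) \<Longrightarrow> p < M \<Longrightarrow> c p = 0"
proof (induction M arbitrary: c p)
  case 0 then show ?case by simp
next
  case (Suc M)
  define c' where "c' p = wsc ((2::complex) ^ p - 2 ^ M) (c p)" for p
  have H: "\<And>x. (\<Sum>p<M. wsc (x ^ p) (c' p)) = 0"
  proof -
    fix x :: complex
    have "(\<Sum>p<M. wsc (x ^ p) (c' p)) = (\<Sum>p<M. wsc ((2 * x) ^ p - 2 ^ M * x ^ p) (c p))"
      by (rule sum.cong) (simp_all add: c'_def power_mult_distrib algebra_simps)
    also have "\<dots> = (\<Sum>p<Suc M. wsc ((2 * x) ^ p - 2 ^ M * x ^ p) (c p))"
      by (simp add: power_mult_distrib)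
    also have "\<dots> = (\<Sum>p<Suc M. wsc ((2 * x) ^ p) (c p)) - (\<Sum>p<Suc M. wsc (2 ^ M * x ^ p) (c p))"
      by (simp only: W.scale_left_diff_distrib sum_subtractf)
    also have "\<dots> = (\<Sum>p<Suc M. wsc ((2 * x) ^ p) (c p)) - wsc (2 ^ M) (\<Sum>p<Suc M. wsc (x ^ p) (c p))"
      by (simp only: W.scale_sum_right W.scale_scale)
    also have "\<dots> = 0" by (simp only: Suc.prems(1) W.scale_zero_right diff_zero)
    finally show "(\<Sum>p<M. wsc (x ^ p) (c' p)) = 0" .
  qed
  have low: "\<And>p. p < M \<Longrightarrow> c p = 0"
  proof -
    fix p assume p: "p < M"
    have "c' p = 0" by (rule Suc.IH[OF H p])
    thus "c p = 0" using pow2_neq[OF p] by (simp add: c'_def)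
  qed
  have s0: "sum c {..<M} = 0" by (rule sum.neutral) (simp add: low)
  have "c M = (\<Sum>p<Suc M. wsc (1 ^ p) (c p))" by (simp only: sum.lessThan_Suc s0 power_one W.scale_one add_0_left)
  also have "\<dots> = 0" by (rule Suc.prems(1))
  finally have "c M = 0" .
  thus ?case using low Suc.prems(2) by (cases "p = M") auto
qed

lemma coeff2: assumes H: "\<And>x y. (\<Sum>j<M. wsc (x ^ j) (\<Sum>k<M. wsc (y ^ k) (P j k))) = 0"
  and j: "j < M" and k: "k < M" shows "P j k = 0"
proof -
  have "\<And>y. (\<Sum>k<M. wsc (y ^ k) (P j k)) = 0"
  proof -
    fix y
    show "(\<Sum>k<M. wsc (y ^ k) (P j k)) = 0"
      by (rule W_coeff[where c = "\<lambda>j. \<Sum>k<M. wsc (y ^ k) (P j k)", OF H j])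
  qed
  thus ?thesis using W_coeff[OF _ k] by blast
qed

lemma coeff3: assumes H: "\<And>x y z. (\<Sum>p<M. wsc (x ^ p) (\<Sum>q<M. wsc (y ^ q) (\<Sum>k<M. wsc (z ^ k) (P p q k)))) = 0"
  and p: "p < M" and q: "q < M" and k: "k < M" shows "P p q k = 0"
proof -
  have "\<And>y z. (\<Sum>q<M. wsc (y ^ q) (\<Sum>k<M. wsc (z ^ k) (P p q k))) = 0"
  proof -
    fix y z
    show "(\<Sum>q<M. wsc (y ^ q) (\<Sum>k<M. wsc (z ^ k) (P p q k))) = 0"
      by (rule W_coeff[where c = "\<lambda>p. \<Sum>q<M. wsc (y ^ q) (\<Sum>k<M. wsc (z ^ k) (P p q k))", OF H p])
  qed
  thus ?thesis using coeff2[OF _ q k] by blast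
qed

definition bnd2 :: "nat \<Rightarrow> (nat \<Rightarrow> 'a Relt) \<Rightarrow> bool" where
  "bnd2 M P \<longleftrightarrow> (\<forall>j k. M \<le> j \<or> M \<le> k \<longrightarrow> P j k = 0)"

lemma EV2_diff: "EV2 M P l d - EV2 M Q l d = (\<Sum>j<M. wsc (l ^ j) (\<Sum>k<M. wsc (d ^ k) (P j k - Q j k)))"
  by (simp add: EV2_def evR_def W.scale_right_diff_distrib sum_subtractf)

lemma EV2_eq: assumes P: "bnd2 M P" and Q: "bnd2 M Q" and E: "\<And>l d. EV2 M P l d = EV2 M Q l d"
  shows "P = Q"
proof (rule ext, rule ext)
  fix j k
  show "P j k = Q j k"
  proof (cases "j < M \<and> k < M")
    case True
    have "P j k - Q j k = 0"
      by (rule coeff2[where P = "\<lambda>j k. P j k - Q j k"]) (use True E EV2_diff[symmetric] in auto)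
    thus ?thesis by simp
  next
    case False thus ?thesis using P Q by (auto simp: bnd2_def)
  qed
qed

definition EV3 :: "nat \<Rightarrow> (nat \<Rightarrow> nat \<Rightarrow> 'a Relt) \<Rightarrow> complex \<Rightarrow> complex \<Rightarrow> complex \<Rightarrow> (nat \<Rightarrow> nat \<Rightarrow> 'a gcomp)" where
  "EV3 M F x y z = (\<Sum>p<M. wsc (x ^ p) (\<Sum>q<M. wsc (y ^ q) (evR M (F p q) z)))"

lemma EV3_eq: assumes P: "\<And>p q k. M \<le> p \<or> M \<le> q \<or> M \<le> k \<Longrightarrow> F p q k = 0"
  and Q: "\<And>p q k. M \<le> p \<or> M \<le> q \<or> M \<le> k \<Longrightarrow> G p q k = 0"
  and E: "\<And>x y z. EV3 M F x y z = EV3 M G x y z"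
  shows "F = G"
proof (rule ext, rule ext, rule ext)
  fix p q k
  show "F p q k = G p q k"
  proof (cases "p < M \<and> q < M \<and> k < M")
    case True
    have D: "\<And>x y z. EV3 M F x y z - EV3 M G x y z = (\<Sum>p<M. wsc (x ^ p) (\<Sum>q<M. wsc (y ^ q) (\<Sum>k<M. wsc (z ^ k) (F p q k - G p q k))))"
      by (simp add: EV3_def evR_def W.scale_right_diff_distrib sum_subtractf)
    have "F p q k - G p q k = 0"
      by (rule coeff3[where P = "\<lambda>p q k. F p q k - G p q k"]) (use True E D[symmetric] in auto)
    thus ?thesis by simp
  next
    case False thus ?thesis using P Q by auto
  qed
qed

end

context LS begin

lemma R_br_nested: "bndR N a \<Longrightarrow> bndR N b \<Longrightarrow> R_br sm br \<beta> a b =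
  (\<Sum>K<N. \<Sum>p\<in>{..<N} \<times> {..<N}. \<Sum>L<N. \<Sum>q\<in>{..<N} \<times> {..<N}. \<Sum>i\<le>L.
      lshift sm ((-1) ^ K * of_nat (L choose i)) (K + i) (L - i)
        (gen_br sm br \<beta> (a K (fst p) (snd p)) (fst p) (snd p) (b L (fst q) (snd q)) (fst q) (snd q)))"
  unfolding R_br_box sum_box by simp

lemma gen_br_supp2: "gen_br sm br \<beta> x m n y t s j k p q \<noteq> 0 \<Longrightarrow> j < 2 \<and> k < 2 \<and> p \<le> m + t \<and> q \<le> n + s"
  by (auto simp: gen_br_def Let_def lmono_def split: if_splits)

lemma term0:
  assumes "K < N" "L < N" "i \<le> L" "m < N" "t < N" "n < N" "s < N"
    and nb: "\<not> (j < 2 * N \<and> k < 2 * N \<and> p < 2 * N \<and> q < 2 * N)"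
  shows "lshift sm c (K + i) (L - i) (gen_br sm br \<beta> x m n y t s) j k p q = 0"
proof (cases "K + i \<le> j \<and> L - i \<le> k")
  case True
  have "gen_br sm br \<beta> x m n y t s (j - (K + i)) (k - (L - i)) p q = 0"
  proof (rule ccontr)
    assume "gen_br sm br \<beta> x m n y t s (j - (K + i)) (k - (L - i)) p q \<noteq> 0"
    from gen_br_supp2[OF this] True assms show False by linarith
  qed
  thus ?thesis using True by (simp add: lshift_def csc_def zero_gcomp)
qed (auto simp: lshift_def)

lemma R_br_bnd: assumes a: "bndR N a" and b: "bndR N b" and nz: "R_br sm br \<beta> a b j k p q \<noteq> 0"
  shows "j < 2 * N \<and> k < 2 * N \<and> p < 2 * N \<and> q < 2 * N"
proof (rule ccontr)
  assume nb: "\<not> (j < 2 * N \<and> k < 2 * N \<and> p < 2 * N \<and> q < 2 * N)"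
  have "R_br sm br \<beta> a b j k p q = 0"
    unfolding R_br_nested[OF a b] sum_apply
    by (intro sum.neutral ballI) (auto intro!: term0[OF _ _ _ _ _ _ _ nb])
  thus False using nz by simp
qed

lemma bndR_R_br: "bndR N a \<Longrightarrow> bndR N b \<Longrightarrow> bndR (2 * N) (R_br sm br \<beta> a b j)"
  using R_br_bnd unfolding bndR_def by blast

lemma R_br_high: assumes "bndR N a" "bndR N b" "2 * N \<le> j" shows "R_br sm br \<beta> a b j = 0"
proof (intro ext)
  fix k p q show "R_br sm br \<beta> a b j k p q = 0 k p q" using R_br_bnd[OF assms(1,2), of j k p q] assms(3) by auto
qed

lemma bnd2_R_br: assumes "bndR N a" "bndR N b" "2 * N \<le> M" shows "bnd2 M (R_br sm br \<beta> a b)"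
  unfolding bnd2_def
proof (intro allI impI)
  fix j k assume jk: "M \<le> j \<or> M \<le> k"
  have "\<forall>p q. R_br sm br \<beta> a b j k p q = 0"
  proof (intro allI, rule ccontr)
    fix p q assume "R_br sm br \<beta> a b j k p q \<noteq> 0"
    from R_br_bnd[OF assms(1,2) this] assms(3) jk show False by linarith
  qed
  thus "R_br sm br \<beta> a b j k = 0" by (auto simp: fun_eq_iff)
qed

lemma cE_sum: fixes f :: "'b \<Rightarrow> 'a gcomp" shows "cE (sum f A) = (\<Sum>i\<in>A. cE (f i))"
  using additive.sum[OF additive.intro, of "cE :: 'a gcomp \<Rightarrow> complex"] by simp

lemma cE_gen_br: "cE (gen_br sm br \<beta> x m n y t s j k p q) = 0"
  by (simp add: gen_br_def Let_def lmono_def)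

lemma cE_R_br: "bndR N a \<Longrightarrow> bndR N b \<Longrightarrow> cE (R_br sm br \<beta> a b j k p q) = 0"
  unfolding R_br_nested sum_apply cE_sum
  by (intro sum.neutral ballI) (simp add: lshift_def csc_def cE_gen_br)

lemma carrier_bnd: assumes "a \<in> R_carrier" shows "\<exists>N. bndR N a"
proof -
  let ?S = "{(k, m, n). a k m n \<noteq> 0}"
  have fin: "finite ?S" using assms by (simp add: R_carrier_def)
  let ?U = "fst ` ?S \<union> (fst \<circ> snd) ` ?S \<union> (snd \<circ> snd) ` ?S"
  have finU: "finite ?U" using fin by simp
  have "bndR (Suc (Max ?U)) a"
    unfolding bndR_def
  proof (intro allI impI)
    fix k m n assume "a k m n \<noteq> 0"
    hence "(k, m, n) \<in> ?S" by simp
    hence "k \<in> ?U" "m \<in> ?U" "n \<in> ?U" by force+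
    thus "k < Suc (Max ?U) \<and> m < Suc (Max ?U) \<and> n < Suc (Max ?U)"
      using Max_ge[OF finU] by (simp add: less_Suc_eq_le)
  qed
  thus ?thesis ..
qed

lemma bndR_mono: "bndR N a \<Longrightarrow> N \<le> N' \<Longrightarrow> bndR N' a"
  by (fastforce simp: bndR_def)

lemma carrier_bnd3: assumes "a \<in> R_carrier" "b \<in> R_carrier" "c \<in> R_carrier"
  shows "\<exists>N. bndR N a \<and> bndR N b \<and> bndR N c"
proof -
  obtain Na Nb Nc where "bndR Na a" "bndR Nb b" "bndR Nc c" using carrier_bnd assms by metis
  hence "bndR (max Na (max Nb Nc)) a \<and> bndR (max Na (max Nb Nc)) b \<and> bndR (max Na (max Nb Nc)) c"
    by (auto elim: bndR_mono)
  thus ?thesis ..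
qed

lemma bndR_add: assumes "bndR N a" "bndR N b" shows "bndR N (a + b)"
  unfolding bndR_def
proof (intro allI impI)
  fix k m n assume "(a + b) k m n \<noteq> 0"
  hence "a k m n \<noteq> 0 \<or> b k m n \<noteq> 0" by auto
  thus "k < N \<and> m < N \<and> n < N" using assms unfolding bndR_def by blast
qed
lemma bndR_sc: assumes "bndR N a" shows "bndR N (R_sc sm z a)"
  unfolding bndR_def
proof (intro allI impI)
  fix k m n assume "R_sc sm z a k m n \<noteq> 0"
  hence "a k m n \<noteq> 0" by (auto simp: R_sc_def)
  thus "k < N \<and> m < N \<and> n < N" using assms unfolding bndR_def by blast
qed
lemma bndR_D: assumes "bndR N a" shows "bndR (Suc N) (R_D a)"
  unfolding bndR_def
proof (intro allI impI)
  fix k m n assume h: "R_D a k m n \<noteq> 0"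
  then obtain k' where k: "k = Suc k'" by (cases k) (auto simp: R_D_def)
  hence "a k' m n \<noteq> 0" using h by (simp add: R_D_def)
  hence "k' < N \<and> m < N \<and> n < N" using assms unfolding bndR_def by blast
  thus "k < Suc N \<and> m < Suc N \<and> n < Suc N" using k by simp
qed

lemma bndR_zero: assumes "bndR N a" "N \<le> k" shows "a k = 0"
proof -
  have "\<forall>m n. a k m n = 0"
  proof (intro allI, rule ccontr)
    fix m n assume "a k m n \<noteq> 0"
    hence "k < N" using assms(1) unfolding bndR_def by blast
    thus False using assms(2) by simp
  qed
  thus ?thesis by (auto simp: fun_eq_iff)
qed

lemma evR_0[simp]: "evR M 0 z = 0"
  by (simp add: evR_def)

lemma R_sc_apply: "R_sc sm z a k = wsc z (a k)"
  by (simp add: R_sc_def wsc_def)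

lemma evR_sc: "evR N (R_sc sm z a) w = wsc z (evR N a w)"
  by (simp add: evR_def R_sc_apply W.scale_sum_right mult.commute)

lemma evR_D: "evR (Suc N) (R_D a) z = wsc z (evR N a z)"
proof -
  have "evR (Suc N) (R_D a) z = (\<Sum>k<N. wsc (z ^ Suc k) (a k))"
    unfolding evR_def sum.lessThan_Suc_shift by (simp add: R_D_def zero_fun_def)
  thus ?thesis by (simp add: evR_def W.scale_sum_right)
qed

lemma evR_mono: "bndR N a \<Longrightarrow> N \<le> N' \<Longrightarrow> evR N' a z = evR N a z"
proof -
  assume b: "bndR N a" and NN: "N \<le> N'"
  have z: "\<And>k. N \<le> k \<Longrightarrow> a k = 0" using bndR_zero[OF b] by blast
  show ?thesis unfolding evR_def
    by (rule sum.mono_neutral_right) (use NN z in auto)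
qed

lemma wbnd_evR: assumes b: "bndR N a" shows "wbnd N (evR M a z)"
  unfolding wbnd_def
proof (intro allI impI, rule ccontr)
  fix m n assume nz: "evR M a z m n \<noteq> 0" and nb: "\<not> (m < N \<and> n < N)"
  have "\<And>k. a k m n = 0" using b nb unfolding bndR_def by auto
  hence "evR M a z m n = 0" by (simp add: evR_def sum_apply wsc_def)
  thus False using nz by simp
qed

lemma EV2_mono: assumes P: "bnd2 M P" and MM: "M \<le> M'" shows "EV2 M' P l d = EV2 M P l d"
proof -
  have e: "\<And>j. evR M' (P j) d = evR M (P j) d"
    unfolding evR_def by (rule sum.mono_neutral_right) (use MM P in \<open>auto simp: bnd2_def\<close>)
  have z: "\<And>j. M \<le> j \<Longrightarrow> P j = 0"
    using P by (auto simp: bnd2_def fun_eq_iff)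
  show ?thesis unfolding EV2_def e
    by (rule sum.mono_neutral_right) (use MM z in \<open>auto simp: evR_def\<close>)
qed

lemma EV2_sc: "EV2 M (\<lambda>j. R_sc sm z (P j)) l d = wsc z (EV2 M P l d)"
  by (simp add: EV2_def evR_sc W.scale_sum_right mult.commute)

lemma EV2_neg: "EV2 M (\<lambda>j. - P j) l d = - EV2 M P l d"
  by (simp add: EV2_def evR_def sum_negf)

lemma EV2_shiftj: assumes P: "bnd2 M P"
  shows "EV2 (Suc M) (\<lambda>j. if j = 0 then 0 else P (j - 1)) l d = wsc l (EV2 M P l d)"
proof -
  have e: "\<And>j. evR (Suc M) (P j) d = evR M (P j) d"
    unfolding evR_def by (rule sum.mono_neutral_right) (use P in \<open>auto simp: bnd2_def\<close>)
  have "EV2 (Suc M) (\<lambda>j. if j = 0 then 0 else P (j - 1)) l d = (\<Sum>j<M. wsc (l ^ Suc j) (evR (Suc M) (P j) d))"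
    unfolding EV2_def sum.lessThan_Suc_shift by simp
  also have "\<dots> = (\<Sum>j<M. wsc l (wsc (l ^ j) (evR M (P j) d)))"
    by (simp add: e)
  also have "\<dots> = wsc l (EV2 M P l d)"
    by (simp add: EV2_def W.scale_sum_right)
  finally show ?thesis .
qed

lemma EV2_D: assumes P: "bnd2 M P"
  shows "EV2 (Suc M) (\<lambda>j. R_D (P j)) l d = wsc d (EV2 M P l d)"
proof -
  have z: "P M = 0"
    using P by (auto simp: bnd2_def fun_eq_iff)
  have "EV2 (Suc M) (\<lambda>j. R_D (P j)) l d = (\<Sum>j<M. wsc (l ^ j) (wsc d (evR M (P j) d)))"
    unfolding EV2_def evR_D sum.lessThan_Suc by (simp add: z evR_def)
  thus ?thesis by (simp add: EV2_def W.scale_sum_right mult.commute)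
qed

end

context LS begin

lemma bnd2_add: "bnd2 M P \<Longrightarrow> bnd2 M Q \<Longrightarrow> bnd2 M (P + Q)"
  by (simp add: bnd2_def)
lemma bnd2_sc: "bnd2 M P \<Longrightarrow> bnd2 M (\<lambda>j. R_sc sm z (P j))"
  by (simp add: bnd2_def R_sc_apply)
lemma bnd2_mono: "bnd2 M P \<Longrightarrow> M \<le> M' \<Longrightarrow> bnd2 M' P"
  by (simp add: bnd2_def)
lemma bnd2_shift: "bnd2 M P \<Longrightarrow> bnd2 (Suc M) (\<lambda>j. if j = 0 then 0 else P (j - 1))"
  by (auto simp: bnd2_def)
lemma bnd2_neg: "bnd2 M P \<Longrightarrow> bnd2 M (\<lambda>j. - P j)"
  by (simp add: bnd2_def)
lemma R_D_0[simp]: "R_D 0 = 0"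
  by (simp add: R_D_def fun_eq_iff split: nat.splits)
lemma bnd2_D: assumes "bnd2 M P" shows "bnd2 (Suc M) (\<lambda>j. R_D (P j))"
  unfolding bnd2_def
proof (intro allI impI)
  fix j k assume h: "Suc M \<le> j \<or> Suc M \<le> k"
  show "R_D (P j) k = 0"
  proof (cases k)
    case 0 thus ?thesis by (simp add: R_D_def fun_eq_iff)
  next
    case (Suc k') thus ?thesis using h assms by (auto simp: R_D_def bnd2_def fun_eq_iff)
  qed
qed

lemma Rsc_vs: "vector_space (R_sc sm)"
proof
  fix a b :: complex and x y :: "'a Relt"
  show "R_sc sm a (x + y) = R_sc sm a x + R_sc sm a y"
    by (simp add: R_sc_def fun_eq_iff G.scale_right_distrib)
  show "R_sc sm (a + b) x = R_sc sm a x + R_sc sm b x"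
    by (simp add: R_sc_def fun_eq_iff G.scale_left_distrib)
  show "R_sc sm a (R_sc sm b x) = R_sc sm (a * b) x"
    by (simp add: R_sc_def fun_eq_iff)
  show "R_sc sm 1 x = x"
    by (simp add: R_sc_def fun_eq_iff)
qed

lemma lb_addL: assumes a: "bndR N a" and b: "bndR N b" and c: "bndR N c"
  shows "R_br sm br \<beta> (a + b) c = R_br sm br \<beta> a c + R_br sm br \<beta> b c"
proof (rule EV2_eq[of "2 * N"])
  show "bnd2 (2 * N) (R_br sm br \<beta> (a + b) c)" by (rule bnd2_R_br[OF bndR_add[OF a b] c order_refl])
  show "bnd2 (2 * N) (R_br sm br \<beta> a c + R_br sm br \<beta> b c)"
    by (rule bnd2_add; rule bnd2_R_br) (use a b c in auto)
  fix l d
  show "EV2 (2 * N) (R_br sm br \<beta> (a + b) c) l d = EV2 (2 * N) (R_br sm br \<beta> a c + R_br sm br \<beta> b c) l d"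
    unfolding EV2_add EVAL[OF bndR_add[OF a b] c order_refl] EVAL[OF a c order_refl] EVAL[OF b c order_refl]
      evR_add Gam_addL ..
qed

lemma lb_addR: assumes a: "bndR N a" and b: "bndR N b" and c: "bndR N c"
  shows "R_br sm br \<beta> a (b + c) = R_br sm br \<beta> a b + R_br sm br \<beta> a c"
proof (rule EV2_eq[of "2 * N"])
  show "bnd2 (2 * N) (R_br sm br \<beta> a (b + c))" by (rule bnd2_R_br[OF a bndR_add[OF b c] order_refl])
  show "bnd2 (2 * N) (R_br sm br \<beta> a b + R_br sm br \<beta> a c)"
    by (rule bnd2_add; rule bnd2_R_br) (use a b c in auto)
  fix l d
  show "EV2 (2 * N) (R_br sm br \<beta> a (b + c)) l d = EV2 (2 * N) (R_br sm br \<beta> a b + R_br sm br \<beta> a c) l d"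
    unfolding EV2_add EVAL[OF a bndR_add[OF b c] order_refl] EVAL[OF a b order_refl] EVAL[OF a c order_refl]
      evR_add Gam_addR ..
qed

lemma lb_scL: assumes a: "bndR N a" and b: "bndR N b"
  shows "R_br sm br \<beta> (R_sc sm z a) b = (\<lambda>j. R_sc sm z (R_br sm br \<beta> a b j))"
proof (rule EV2_eq[of "2 * N"])
  show "bnd2 (2 * N) (R_br sm br \<beta> (R_sc sm z a) b)" by (rule bnd2_R_br[OF bndR_sc[OF a] b order_refl])
  show "bnd2 (2 * N) (\<lambda>j. R_sc sm z (R_br sm br \<beta> a b j))" by (rule bnd2_sc, rule bnd2_R_br[OF a b order_refl])
  fix l d
  show "EV2 (2 * N) (R_br sm br \<beta> (R_sc sm z a) b) l d = EV2 (2 * N) (\<lambda>j. R_sc sm z (R_br sm br \<beta> a b j)) l d"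
    unfolding EV2_sc EVAL[OF bndR_sc[OF a] b order_refl] EVAL[OF a b order_refl] evR_sc Gam_scL ..
qed

lemma lb_scR: assumes a: "bndR N a" and b: "bndR N b"
  shows "R_br sm br \<beta> a (R_sc sm z b) = (\<lambda>j. R_sc sm z (R_br sm br \<beta> a b j))"
proof (rule EV2_eq[of "2 * N"])
  show "bnd2 (2 * N) (R_br sm br \<beta> a (R_sc sm z b))" by (rule bnd2_R_br[OF a bndR_sc[OF b] order_refl])
  show "bnd2 (2 * N) (\<lambda>j. R_sc sm z (R_br sm br \<beta> a b j))" by (rule bnd2_sc, rule bnd2_R_br[OF a b order_refl])
  fix l d
  show "EV2 (2 * N) (R_br sm br \<beta> a (R_sc sm z b)) l d = EV2 (2 * N) (\<lambda>j. R_sc sm z (R_br sm br \<beta> a b j)) l d"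
    unfolding EV2_sc EVAL[OF a bndR_sc[OF b] order_refl] EVAL[OF a b order_refl] evR_sc Gam_scR ..
qed

lemma sesq1: assumes a: "bndR N a" and b: "bndR N b"
  shows "R_br sm br \<beta> (R_D a) b = (\<lambda>j. if j = 0 then 0 else - R_br sm br \<beta> a b (j - 1))"
proof -
  let ?P = "R_br sm br \<beta> a b"
  have a1: "bndR (Suc N) (R_D a)" by (rule bndR_D[OF a])
  have b1: "bndR (Suc N) b" by (rule bndR_mono[OF b]) simp
  have P: "bnd2 (2 * N) ?P" by (rule bnd2_R_br[OF a b order_refl])
  have eb: "\<And>z. evR (Suc N) b z = evR N b z" by (rule evR_mono[OF b]) simp
  have eq: "(\<lambda>j. if j = 0 then 0 else - ?P (j - 1)) = (\<lambda>j. - (if j = 0 then 0 else ?P (j - 1)))"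
    by (simp add: fun_eq_iff)
  have Q: "bnd2 (Suc (2 * N)) (\<lambda>j. if j = 0 then 0 else - ?P (j - 1))"
    unfolding eq by (rule bnd2_neg, rule bnd2_shift[OF P])
  show ?thesis
  proof (rule EV2_eq[of "2 * Suc N"])
    show "bnd2 (2 * Suc N) (R_br sm br \<beta> (R_D a) b)" by (rule bnd2_R_br[OF a1 b1 order_refl])
    show "bnd2 (2 * Suc N) (\<lambda>j. if j = 0 then 0 else - ?P (j - 1))" by (rule bnd2_mono[OF Q]) simp
    fix l d
    have "EV2 (2 * Suc N) (R_br sm br \<beta> (R_D a) b) l d = wsc (- l) (EV2 (2 * N) ?P l d)"
      unfolding EVAL[OF a1 b1 order_refl] EVAL[OF a b order_refl] evR_D eb Gam_scL
      by simp
    also have "\<dots> = EV2 (Suc (2 * N)) (\<lambda>j. if j = 0 then 0 else - ?P (j - 1)) l d"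
      unfolding eq EV2_neg EV2_shiftj[OF P] by simp
    also have "\<dots> = EV2 (2 * Suc N) (\<lambda>j. if j = 0 then 0 else - ?P (j - 1)) l d"
      by (rule EV2_mono[OF Q, symmetric]) simp
    finally show "EV2 (2 * Suc N) (R_br sm br \<beta> (R_D a) b) l d = EV2 (2 * Suc N) (\<lambda>j. if j = 0 then 0 else - ?P (j - 1)) l d" .
  qed
qed

lemma sesq2: assumes a: "bndR N a" and b: "bndR N b"
  shows "R_br sm br \<beta> a (R_D b) = (\<lambda>j. (if j = 0 then 0 else R_br sm br \<beta> a b (j - 1)) + R_D (R_br sm br \<beta> a b j))"
proof -
  let ?P = "R_br sm br \<beta> a b"
  have b1: "bndR (Suc N) (R_D b)" by (rule bndR_D[OF b])
  have a1: "bndR (Suc N) a" by (rule bndR_mono[OF a]) simp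
  have P: "bnd2 (2 * N) ?P" by (rule bnd2_R_br[OF a b order_refl])
  have ea: "\<And>z. evR (Suc N) a z = evR N a z" by (rule evR_mono[OF a]) simp
  have eq: "(\<lambda>j. (if j = 0 then 0 else ?P (j - 1)) + R_D (?P j)) = (\<lambda>j. if j = 0 then 0 else ?P (j - 1)) + (\<lambda>j. R_D (?P j))"
    by (simp add: fun_eq_iff)
  have Q1: "bnd2 (Suc (2 * N)) (\<lambda>j. if j = 0 then 0 else ?P (j - 1))" by (rule bnd2_shift[OF P])
  have Q2: "bnd2 (Suc (2 * N)) (\<lambda>j. R_D (?P j))" by (rule bnd2_D[OF P])
  show ?thesis
  proof (rule EV2_eq[of "2 * Suc N"])
    show "bnd2 (2 * Suc N) (R_br sm br \<beta> a (R_D b))" by (rule bnd2_R_br[OF a1 b1 order_refl])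
    show "bnd2 (2 * Suc N) (\<lambda>j. (if j = 0 then 0 else ?P (j - 1)) + R_D (?P j))"
      unfolding eq by (rule bnd2_add; rule bnd2_mono[OF Q1] bnd2_mono[OF Q2]) simp_all
    fix l d
    have "EV2 (2 * Suc N) (R_br sm br \<beta> a (R_D b)) l d = wsc (l + d) (EV2 (2 * N) ?P l d)"
      unfolding EVAL[OF a1 b1 order_refl] EVAL[OF a b order_refl] evR_D ea Gam_scR
      by simp
    also have "\<dots> = EV2 (Suc (2 * N)) (\<lambda>j. if j = 0 then 0 else ?P (j - 1)) l d + EV2 (Suc (2 * N)) (\<lambda>j. R_D (?P j)) l d"
      unfolding EV2_shiftj[OF P] EV2_D[OF P] by (simp add: W.scale_left_distrib)
    also have "\<dots> = EV2 (2 * Suc N) (\<lambda>j. (if j = 0 then 0 else ?P (j - 1)) + R_D (?P j)) l d"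
    proof -
      have m1: "EV2 (2 * Suc N) (\<lambda>j. if j = 0 then 0 else ?P (j - 1)) l d = EV2 (Suc (2 * N)) (\<lambda>j. if j = 0 then 0 else ?P (j - 1)) l d"
        by (rule EV2_mono[OF Q1]) simp
      have m2: "EV2 (2 * Suc N) (\<lambda>j. R_D (?P j)) l d = EV2 (Suc (2 * N)) (\<lambda>j. R_D (?P j)) l d"
        by (rule EV2_mono[OF Q2]) simp
      show ?thesis unfolding eq EV2_add m1 m2 ..
    qed
    finally show "EV2 (2 * Suc N) (R_br sm br \<beta> a (R_D b)) l d = EV2 (2 * Suc N) (\<lambda>j. (if j = 0 then 0 else ?P (j - 1)) + R_D (?P j)) l d" .
  qed
qed

end

context LS begin

lemma Dpow_apply: "(R_D ^^ e) r k = (if e \<le> k then r (k - e) else 0)"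
proof (induction e arbitrary: k)
  case 0 show ?case by simp
next
  case (Suc e)
  show ?case
  proof (cases k)
    case 0 thus ?thesis by (simp add: R_D_def fun_eq_iff)
  next
    case (Suc k') thus ?thesis using Suc.IH[of k'] by (simp add: R_D_def fun_eq_iff)
  qed
qed

lemma Dpow_0[simp]: "(R_D ^^ e) 0 = 0"
  by (simp add: fun_eq_iff Dpow_apply)

lemma R_sc_0[simp]: "R_sc sm z 0 = 0" and R_sc_0l[simp]: "R_sc sm 0 r = 0"
  by (simp_all add: R_sc_def fun_eq_iff csc_def zero_gcomp)

lemma evR_sum: "evR M (\<Sum>i\<in>A. f i) z = (\<Sum>i\<in>A. evR M (f i) z)"
  using additive.sum[OF additive.intro, of "\<lambda>r. evR M r z"] evR_add by blast
lemma evR_neg: "evR M (- r) z = - evR M r z"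
  by (simp add: evR_def sum_negf)

lemma evR_Dpow: assumes z: "\<And>k. M \<le> k + e \<Longrightarrow> r k = 0"
  shows "evR M ((R_D ^^ e) r) z = wsc (z ^ e) (evR M r z)"
proof (cases "e \<le> M")
  case False
  have "evR M ((R_D ^^ e) r) z = 0" unfolding evR_def Dpow_apply using False
    by (intro sum.neutral) auto
  moreover have "evR M r z = 0" unfolding evR_def using False z by (intro sum.neutral) auto
  ultimately show ?thesis by simp
next
  case True
  have "evR M ((R_D ^^ e) r) z = (\<Sum>k\<in>{k\<in>{..<M}. e \<le> k}. wsc (z ^ k) (r (k - e)))"
  proof -
    have e1: "\<And>k. wsc (z ^ k) (if e \<le> k then r (k - e) else 0) = (if e \<le> k then wsc (z ^ k) (r (k - e)) else 0)"
      by simp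
    show ?thesis unfolding evR_def Dpow_apply e1 by (rule sum.inter_filter[symmetric], simp)
  qed
  also have "{k\<in>{..<M}. e \<le> k} = {0 + e..<(M - e) + e}" using True by auto
  also have "(\<Sum>k\<in>{0 + e..<(M - e) + e}. wsc (z ^ k) (r (k - e))) = (\<Sum>k\<in>{0..<M - e}. wsc (z ^ (k + e)) (r k))"
    unfolding sum.shift_bounds_nat_ivl by simp
  also have "\<dots> = (\<Sum>k<M. wsc (z ^ (k + e)) (r k))"
    by (rule sum.mono_neutral_left) (use z in auto)
  also have "\<dots> = wsc (z ^ e) (evR M r z)"
    by (simp add: evR_def W.scale_sum_right power_add mult.commute)
  finally show ?thesis .
qed

lemma binom2: assumes i: "i < M"
  shows "(\<Sum>j<M. wsc (l ^ j) (wsc ((-1) ^ i * of_nat (i choose j)) (wsc (d ^ (i - j)) X))) = wsc ((- l - d) ^ i) X"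
proof -
  have "(\<Sum>j<M. wsc (l ^ j) (wsc ((-1) ^ i * of_nat (i choose j)) (wsc (d ^ (i - j)) X)))
      = wsc (\<Sum>j<M. (-1) ^ i * (of_nat (i choose j) * l ^ j * d ^ (i - j))) X"
    by (simp add: W.scale_sum_left mult.commute mult.left_commute)
  also have "(\<Sum>j<M. (-1) ^ i * (of_nat (i choose j) * l ^ j * d ^ (i - j))) = (\<Sum>j\<le>i. (-1) ^ i * (of_nat (i choose j) * l ^ j * d ^ (i - j)))"
    by (rule sum.mono_neutral_right) (use i in auto)
  also have "\<dots> = (-1) ^ i * (l + d) ^ i"
    unfolding sum_distrib_left[symmetric] binomial_ring[symmetric] ..
  also have "\<dots> = (- l - d) ^ i"
  proof -
    have "(- l - d) = (-1) * (l + d)" by simp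
    thus ?thesis by (simp only: power_mult_distrib)
  qed
  finally show ?thesis .
qed

lemma skew:
  assumes a: "bndR N a" and b: "bndR N b"
  shows "R_br sm br \<beta> a b = (\<lambda>j. - (\<Sum>i\<in>{i. R_br sm br \<beta> b a i \<noteq> 0}.
      R_sc sm ((-1) ^ i * of_nat (i choose j)) ((R_D ^^ (i - j)) (R_br sm br \<beta> b a i))))"
    (is "_ = ?S")
proof -
  let ?P = "R_br sm br \<beta> b a"
  let ?T = "\<lambda>i j. R_sc sm ((-1) ^ i * of_nat (i choose j)) ((R_D ^^ (i - j)) (?P i))"
  have Phigh: "\<And>i. 2 * N \<le> i \<Longrightarrow> ?P i = 0" by (rule R_br_high[OF b a])
  have Pb: "\<And>i. bndR (2 * N) (?P i)" by (rule bndR_R_br[OF b a])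
  have S_eq: "?S = (\<lambda>j. - (\<Sum>i<2 * N. ?T i j))"
  proof (rule ext)
    fix j
    have "(\<Sum>i\<in>{i. ?P i \<noteq> 0}. ?T i j) = (\<Sum>i<2 * N. ?T i j)"
      by (rule sum.mono_neutral_left) (use Phigh in \<open>auto intro: ccontr\<close>)
    thus "?S j = - (\<Sum>i<2 * N. ?T i j)" by simp
  qed
  have bS: "bnd2 (4 * N) (\<lambda>j. - (\<Sum>i<2 * N. ?T i j))"
    unfolding bnd2_def
  proof (intro allI impI)
    fix j k assume h: "4 * N \<le> j \<or> 4 * N \<le> k"
    have "\<And>i. i < 2 * N \<Longrightarrow> ?T i j k = 0"
    proof -
      fix i assume i: "i < 2 * N"
      show "?T i j k = 0"
      proof (cases "4 * N \<le> j")
        case True hence "i choose j = 0" using i by simp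
        hence "?T i j = 0" by (simp only: of_nat_0 mult_zero_right R_sc_0l)
        thus ?thesis by simp
      next
        case False hence k: "4 * N \<le> k" using h by simp
        have "(R_D ^^ (i - j)) (?P i) k = 0"
          unfolding Dpow_apply using bndR_zero[OF Pb, of "k - (i - j)"] k i by auto
        thus ?thesis by (simp add: R_sc_apply)
      qed
    qed
    thus "(\<lambda>j. - (\<Sum>i<2 * N. ?T i j)) j k = 0" by (simp add: sum_apply)
  qed
  have bR: "bnd2 (4 * N) (R_br sm br \<beta> a b)" by (rule bnd2_R_br[OF a b]) simp
  have bP: "bnd2 (2 * N) ?P" by (rule bnd2_R_br[OF b a order_refl])
  show ?thesis unfolding S_eq
  proof (rule EV2_eq[OF bR bS])
    fix l d
    have eT: "\<And>i j. i < 2 * N \<Longrightarrow> evR (4 * N) (?T i j) d = wsc ((-1) ^ i * of_nat (i choose j)) (wsc (d ^ (i - j)) (evR (4 * N) (?P i) d))"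
    proof -
      fix i j assume i: "i < 2 * N"
      show "evR (4 * N) (?T i j) d = wsc ((-1) ^ i * of_nat (i choose j)) (wsc (d ^ (i - j)) (evR (4 * N) (?P i) d))"
        unfolding evR_sc
        by (subst evR_Dpow) (use bndR_zero[OF Pb] i in auto)
    qed
    have "EV2 (4 * N) (\<lambda>j. - (\<Sum>i<2 * N. ?T i j)) l d
        = - (\<Sum>j<4 * N. \<Sum>i<2 * N. wsc (l ^ j) (wsc ((-1) ^ i * of_nat (i choose j)) (wsc (d ^ (i - j)) (evR (4 * N) (?P i) d))))"
      unfolding EV2_def evR_neg evR_sum by (simp add: eT W.scale_sum_right sum_negf)
    also have "\<dots> = - (\<Sum>i<2 * N. \<Sum>j<4 * N. wsc (l ^ j) (wsc ((-1) ^ i * of_nat (i choose j)) (wsc (d ^ (i - j)) (evR (4 * N) (?P i) d))))"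
      by (rule arg_cong[where f = uminus], rule sum.swap)
    also have "\<dots> = - (\<Sum>i<2 * N. wsc ((- l - d) ^ i) (evR (4 * N) (?P i) d))"
      by (rule arg_cong[where f = uminus], rule sum.cong[OF refl], rule binom2, simp)
    also have "\<dots> = - EV2 (2 * N) ?P (- l - d) d"
    proof -
      have "\<And>i. evR (4 * N) (?P i) d = evR (2 * N) (?P i) d" by (rule evR_mono[OF Pb]) simp
      thus ?thesis by (simp add: EV2_def)
    qed
    also have "\<dots> = - Gam (evR N b (l + d)) (evR N a (- l)) (- l - d) d"
      unfolding EVAL[OF b a order_refl] by (simp add: add.commute)
    also have "\<dots> = Gam (evR N a (- l)) (evR N b (l + d)) l d"
      using SKEW_Gam[OF wbnd_evR[OF a] wbnd_evR[OF b], where l = l and d = d] by simp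
    also have "\<dots> = EV2 (2 * N) (R_br sm br \<beta> a b) l d"
      by (rule EVAL[OF a b order_refl, symmetric])
    also have "\<dots> = EV2 (4 * N) (R_br sm br \<beta> a b) l d"
      by (rule EV2_mono[OF bnd2_R_br[OF a b order_refl], symmetric]) simp
    finally show "EV2 (4 * N) (R_br sm br \<beta> a b) l d = EV2 (4 * N) (\<lambda>j. - (\<Sum>i<2 * N. ?T i j)) l d" by simp
  qed
qed

end

context LS begin

lemma reindex:
  fixes w :: "nat \<Rightarrow> nat \<Rightarrow> (nat \<Rightarrow> nat \<Rightarrow> 'a gcomp)"
  assumes w: "\<And>j r. w j r \<noteq> 0 \<Longrightarrow> j < A \<and> r < A" and M: "2 * A \<le> M"
  shows "(\<Sum>p<M. \<Sum>q<M. \<Sum>j\<le>p. wsc (l ^ p * \<mu> ^ q * of_nat ((p + q - j) choose q)) (w j (p + q - j)))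
       = (\<Sum>j<A. \<Sum>r<A. \<Sum>q\<le>r. wsc (l ^ j * (of_nat (r choose q) * \<mu> ^ q * l ^ (r - q))) (w j r))"
proof -
  define F where "F = (\<lambda>(p, q, j). wsc (l ^ p * \<mu> ^ q * of_nat ((p + q - j) choose q)) (w j (p + q - j)))"
  define G where "G = (\<lambda>(j, r, q). wsc (l ^ j * (of_nat (r choose q) * \<mu> ^ q * l ^ (r - q))) (w j r))"
  define S0 where "S0 = (SIGMA p:{..<M}. {..<M} \<times> {..p})"
  define S where "S = {x \<in> S0. case x of (p, q, j) \<Rightarrow> j < A \<and> p + q - j < A}"
  define T where "T = (SIGMA j:{..<A}. SIGMA r:{..<A}. {..r})"
  have L: "(\<Sum>p<M. \<Sum>q<M. \<Sum>j\<le>p. wsc (l ^ p * \<mu> ^ q * of_nat ((p + q - j) choose q)) (w j (p + q - j))) = sum F S0"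
    unfolding S0_def F_def
    by (subst sum.Sigma[symmetric]) (auto simp: sum.cartesian_product split_def)
  have R: "(\<Sum>j<A. \<Sum>r<A. \<Sum>q\<le>r. wsc (l ^ j * (of_nat (r choose q) * \<mu> ^ q * l ^ (r - q))) (w j r)) = sum G T"
    unfolding T_def G_def
    by (subst sum.Sigma[symmetric], simp, simp, rule sum.cong[OF refl], subst sum.Sigma[symmetric]) (auto simp: split_def)
  have finS0: "finite S0" unfolding S0_def by auto
  have "sum F S0 = sum F S"
  proof (rule sum.mono_neutral_right[OF finS0])
    show "S \<subseteq> S0" unfolding S_def by auto
    show "\<forall>i\<in>S0 - S. F i = 0"
    proof
      fix x assume x: "x \<in> S0 - S"
      obtain p q j where xe: "x = (p, q, j)" by (cases x) auto
      have "\<not> (j < A \<and> p + q - j < A)" using x unfolding xe S_def by auto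
      hence "w j (p + q - j) = 0" using w by blast
      thus "F x = 0" unfolding xe F_def by simp
    qed
  qed
  also have "sum F S = sum G T"
  proof (rule sum.reindex_bij_witness[where i = "\<lambda>(j, r, q). (j + r - q, q, j)" and j = "\<lambda>(p, q, j). (j, p + q - j, q)"])
    fix x assume x: "x \<in> S"
    obtain p q j where xe: "x = (p, q, j)" by (cases x) auto
    have c: "p < M" "q < M" "j \<le> p" "j < A" "p + q - j < A" using x unfolding xe S_def S0_def by auto
    show "(case case x of (p, q, j) \<Rightarrow> (j, p + q - j, q) of (j, r, q) \<Rightarrow> (j + r - q, q, j)) = x"
      unfolding xe using c by auto
    show "(case x of (p, q, j) \<Rightarrow> (j, p + q - j, q)) \<in> T"
      unfolding xe T_def using c by auto
    show "G (case x of (p, q, j) \<Rightarrow> (j, p + q - j, q)) = F x"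
    proof -
      have e: "p + q - j - q = p - j" by simp
      have "l ^ j * l ^ (p - j) = l ^ p" using c(3) by (simp add: power_add[symmetric])
      thus ?thesis unfolding xe G_def F_def using e by (simp add: mult_ac)
    qed
  next
    fix y assume y: "y \<in> T"
    obtain j r q where ye: "y = (j, r, q)" by (cases y) auto
    have c: "j < A" "r < A" "q \<le> r" using y unfolding ye T_def by auto
    show "(case case y of (j, r, q) \<Rightarrow> (j + r - q, q, j) of (p, q, j) \<Rightarrow> (j, p + q - j, q)) = y"
      unfolding ye using c by auto
    show "(case y of (j, r, q) \<Rightarrow> (j + r - q, q, j)) \<in> S"
      unfolding ye S_def S0_def using c M by auto
  qed
  finally show ?thesis using L R by simp
qed

end

context LS begin

lemma R_br_0L[simp]: "R_br sm br \<beta> 0 c = 0"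
  by (simp add: R_br_def)
lemma R_br_0R[simp]: "R_br sm br \<beta> a 0 = 0"
  by (simp add: R_br_def)

lemma EV3_add: "EV3 M (\<lambda>p q. F p q + G p q) x y z = EV3 M F x y z + EV3 M G x y z"
  by (simp add: EV3_def evR_add W.scale_right_distrib sum.distrib)

lemma jacobi:
  assumes a: "bndR N a" and b: "bndR N b" and c: "bndR N c"
  shows "(\<lambda>p q. R_br sm br \<beta> a (R_br sm br \<beta> b c q) p)
    = (\<lambda>p q. R_br sm br \<beta> b (R_br sm br \<beta> a c p) q
        + (\<Sum>j\<le>p. R_sc sm (of_nat ((p + q - j) choose q)) (R_br sm br \<beta> (R_br sm br \<beta> a b j) c (p + q - j))))"
proof -
  let ?M = "8 * N"
  let ?X = "\<lambda>q. R_br sm br \<beta> b c q"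
  let ?Y = "\<lambda>p. R_br sm br \<beta> a c p"
  let ?Z = "\<lambda>j. R_br sm br \<beta> a b j"
  let ?W = "\<lambda>j r. R_br sm br \<beta> (?Z j) c r"
  have a2: "bndR (2 * N) a" by (rule bndR_mono[OF a]) simp
  have b2: "bndR (2 * N) b" by (rule bndR_mono[OF b]) simp
  have c2: "bndR (2 * N) c" by (rule bndR_mono[OF c]) simp
  have Xb: "\<And>q. bndR (2 * N) (?X q)" by (rule bndR_R_br[OF b c])
  have Yb: "\<And>p. bndR (2 * N) (?Y p)" by (rule bndR_R_br[OF a c])
  have Zb: "\<And>j. bndR (2 * N) (?Z j)" by (rule bndR_R_br[OF a b])
  have Xh: "\<And>q. 2 * N \<le> q \<Longrightarrow> ?X q = 0" by (rule R_br_high[OF b c])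
  have Yh: "\<And>p. 2 * N \<le> p \<Longrightarrow> ?Y p = 0" by (rule R_br_high[OF a c])
  have Zh: "\<And>j. 2 * N \<le> j \<Longrightarrow> ?Z j = 0" by (rule R_br_high[OF a b])
  have Wnz: "\<And>j r k. ?W j r k \<noteq> 0 \<Longrightarrow> j < 2 * N \<and> r < 4 * N \<and> k < 4 * N"
  proof -
    fix j r k assume nz: "?W j r k \<noteq> 0"
    have j: "j < 2 * N"
    proof (rule ccontr)
      assume "\<not> j < 2 * N" hence "?Z j = 0" using Zh by simp
      thus False using nz by simp
    qed
    obtain p q where "?W j r k p q \<noteq> 0" using nz by (auto simp: fun_eq_iff)
    from R_br_bnd[OF Zb c2 this] j show "j < 2 * N \<and> r < 4 * N \<and> k < 4 * N" by simp
  qed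
  have Fnz: "\<And>p q k. R_br sm br \<beta> a (?X q) p k \<noteq> 0 \<Longrightarrow> p < 4 * N \<and> q < 2 * N \<and> k < 4 * N"
  proof -
    fix p q k assume nz: "R_br sm br \<beta> a (?X q) p k \<noteq> 0"
    have q: "q < 2 * N"
    proof (rule ccontr)
      assume "\<not> q < 2 * N" hence "?X q = 0" using Xh by simp
      thus False using nz by simp
    qed
    obtain m n where "R_br sm br \<beta> a (?X q) p k m n \<noteq> 0" using nz by (auto simp: fun_eq_iff)
    from R_br_bnd[OF a2 Xb this] q show "p < 4 * N \<and> q < 2 * N \<and> k < 4 * N" by simp
  qed
  have R1nz: "\<And>p q k. R_br sm br \<beta> b (?Y p) q k \<noteq> 0 \<Longrightarrow> p < 2 * N \<and> q < 4 * N \<and> k < 4 * N"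
  proof -
    fix p q k assume nz: "R_br sm br \<beta> b (?Y p) q k \<noteq> 0"
    have p: "p < 2 * N"
    proof (rule ccontr)
      assume "\<not> p < 2 * N" hence "?Y p = 0" using Yh by simp
      thus False using nz by simp
    qed
    obtain m n where "R_br sm br \<beta> b (?Y p) q k m n \<noteq> 0" using nz by (auto simp: fun_eq_iff)
    from R_br_bnd[OF b2 Yb this] p show "p < 2 * N \<and> q < 4 * N \<and> k < 4 * N" by simp
  qed
  have R2nz: "\<And>p q k. (\<Sum>j\<le>p. R_sc sm (of_nat ((p + q - j) choose q)) (?W j (p + q - j))) k \<noteq> 0 \<Longrightarrow> p + q < 6 * N \<and> k < 4 * N"
  proof -
    fix p q k assume nz: "(\<Sum>j\<le>p. R_sc sm (of_nat ((p + q - j) choose q)) (?W j (p + q - j))) k \<noteq> 0"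
    have "(\<Sum>j\<le>p. R_sc sm (of_nat ((p + q - j) choose q)) (?W j (p + q - j)) k) \<noteq> 0"
      using nz sum_apply[of "\<lambda>j. R_sc sm (of_nat ((p + q - j) choose q)) (?W j (p + q - j))" "{..p}" k] by simp
    then obtain j where j: "j \<le> p" and nzj: "R_sc sm (of_nat ((p + q - j) choose q)) (?W j (p + q - j)) k \<noteq> 0"
      using sum.not_neutral_contains_not_neutral by blast
    have "?W j (p + q - j) k \<noteq> 0" using nzj by (auto simp: R_sc_apply)
    from Wnz[OF this] j show "p + q < 6 * N \<and> k < 4 * N" by linarith
  qed
  show ?thesis
  proof (rule EV3_eq[of ?M])
    fix p q k assume h: "?M \<le> p \<or> ?M \<le> q \<or> ?M \<le> k"
    show "R_br sm br \<beta> a (?X q) p k = 0" using Fnz[of q p k] h by (cases "R_br sm br \<beta> a (?X q) p k = 0") auto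
  next
    fix p q k assume h: "?M \<le> p \<or> ?M \<le> q \<or> ?M \<le> k"
    have "R_br sm br \<beta> b (?Y p) q k = 0" using R1nz[of p q k] h by (cases "R_br sm br \<beta> b (?Y p) q k = 0") auto
    moreover have "(\<Sum>j\<le>p. R_sc sm (of_nat ((p + q - j) choose q)) (?W j (p + q - j))) k = 0"
      using R2nz[of p q k] h by (cases "(\<Sum>j\<le>p. R_sc sm (of_nat ((p + q - j) choose q)) (?W j (p + q - j))) k = 0") auto
    ultimately show "(R_br sm br \<beta> b (?Y p) q + (\<Sum>j\<le>p. R_sc sm (of_nat ((p + q - j) choose q)) (?W j (p + q - j)))) k = 0"
      by simp
  next
    fix l \<mu> d
    let ?A = "evR N a (- l)" and ?B = "evR N b (- \<mu>)"
    have eA2: "\<And>z. evR (2 * N) a z = evR N a z" by (rule evR_mono[OF a]) simp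
    have eB2: "\<And>z. evR (2 * N) b z = evR N b z" by (rule evR_mono[OF b]) simp
    have eC2: "\<And>z. evR (2 * N) c z = evR N c z" by (rule evR_mono[OF c]) simp
    have eX: "\<And>q z. evR ?M (?X q) z = evR (2 * N) (?X q) z" by (rule evR_mono[OF Xb]) simp
    have eY: "\<And>p z. evR ?M (?Y p) z = evR (2 * N) (?Y p) z" by (rule evR_mono[OF Yb]) simp
    have M4: "2 * (2 * N) \<le> ?M" by simp
    have M2: "2 * N \<le> ?M" by simp
    have M8: "2 * (4 * N) \<le> ?M" by simp
    have F1: "EV3 ?M (\<lambda>p q. R_br sm br \<beta> a (?X q) p) l \<mu> d = (\<Sum>q<?M. wsc (\<mu> ^ q) (EV2 ?M (R_br sm br \<beta> a (?X q)) l d))"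
      unfolding EV3_def EV2_def W.scale_sum_right W.scale_scale
      by (subst sum.swap) (simp add: mult.commute)
    have F2: "\<And>z. (\<Sum>q<?M. wsc (\<mu> ^ q) (evR (2 * N) (?X q) z)) = Gam ?B (evR N c (\<mu> + z)) \<mu> z"
    proof -
      fix z
      have "(\<Sum>q<?M. wsc (\<mu> ^ q) (evR (2 * N) (?X q) z)) = EV2 ?M (R_br sm br \<beta> b c) \<mu> z"
        unfolding EV2_def eX ..
      also have "\<dots> = Gam ?B (evR N c (\<mu> + z)) \<mu> z" by (rule EVAL[OF b c M2])
      finally show "(\<Sum>q<?M. wsc (\<mu> ^ q) (evR (2 * N) (?X q) z)) = Gam ?B (evR N c (\<mu> + z)) \<mu> z" .
    qed
    have LHS: "EV3 ?M (\<lambda>p q. R_br sm br \<beta> a (?X q) p) l \<mu> d = Gam ?A (Gam ?B (evR N c (\<mu> + (l + d))) \<mu> (l + d)) l d"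
      unfolding F1 EVAL[OF a2 Xb M4] eA2 Gam_scR[symmetric] Gam_sumR[symmetric] F2 ..
    have G2: "\<And>z. (\<Sum>p<?M. wsc (l ^ p) (evR (2 * N) (?Y p) z)) = Gam ?A (evR N c (l + z)) l z"
    proof -
      fix z
      have "(\<Sum>p<?M. wsc (l ^ p) (evR (2 * N) (?Y p) z)) = EV2 ?M (R_br sm br \<beta> a c) l z"
        unfolding EV2_def eY ..
      also have "\<dots> = Gam ?A (evR N c (l + z)) l z" by (rule EVAL[OF a c M2])
      finally show "(\<Sum>p<?M. wsc (l ^ p) (evR (2 * N) (?Y p) z)) = Gam ?A (evR N c (l + z)) l z" .
    qed
    have RHS1: "EV3 ?M (\<lambda>p q. R_br sm br \<beta> b (?Y p) q) l \<mu> d = Gam ?B (Gam ?A (evR N c (l + (\<mu> + d))) l (\<mu> + d)) \<mu> d"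
    proof -
      have "EV3 ?M (\<lambda>p q. R_br sm br \<beta> b (?Y p) q) l \<mu> d = (\<Sum>p<?M. wsc (l ^ p) (EV2 ?M (R_br sm br \<beta> b (?Y p)) \<mu> d))"
        unfolding EV3_def EV2_def ..
      also have "\<dots> = Gam ?B (Gam ?A (evR N c (l + (\<mu> + d))) l (\<mu> + d)) \<mu> d"
        unfolding EVAL[OF b2 Yb M4] eB2 Gam_scR[symmetric] Gam_sumR[symmetric] G2 ..
      finally show ?thesis .
    qed
    let ?w = "\<lambda>j r. evR ?M (?W j r) d"
    have wnz: "\<And>j r. ?w j r \<noteq> 0 \<Longrightarrow> j < 4 * N \<and> r < 4 * N"
    proof -
      fix j r assume "?w j r \<noteq> 0"
      hence "(\<Sum>k<?M. wsc (d ^ k) (?W j r k)) \<noteq> 0" by (simp add: evR_def)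
      then obtain k where "wsc (d ^ k) (?W j r k) \<noteq> 0" using sum.not_neutral_contains_not_neutral by blast
      hence "?W j r k \<noteq> 0" by auto
      from Wnz[OF this] show "j < 4 * N \<and> r < 4 * N" by simp
    qed
    have H1: "EV3 ?M (\<lambda>p q. \<Sum>j\<le>p. R_sc sm (of_nat ((p + q - j) choose q)) (?W j (p + q - j))) l \<mu> d
      = (\<Sum>p<?M. \<Sum>q<?M. \<Sum>j\<le>p. wsc (l ^ p * \<mu> ^ q * of_nat ((p + q - j) choose q)) (?w j (p + q - j)))"
      unfolding EV3_def evR_sum evR_sc W.scale_sum_right W.scale_scale by (simp add: mult.assoc)
    also have "\<dots> = (\<Sum>j<4 * N. \<Sum>r<4 * N. \<Sum>q\<le>r. wsc (l ^ j * (of_nat (r choose q) * \<mu> ^ q * l ^ (r - q))) (?w j r))"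
      by (rule reindex[OF wnz M8])
    also have "\<dots> = (\<Sum>j<4 * N. wsc (l ^ j) (\<Sum>r<4 * N. wsc ((l + \<mu>) ^ r) (?w j r)))"
    proof -
      have "\<And>j r. (\<Sum>q\<le>r. wsc (l ^ j * (of_nat (r choose q) * \<mu> ^ q * l ^ (r - q))) (?w j r)) = wsc (l ^ j) (wsc ((l + \<mu>) ^ r) (?w j r))"
      proof -
        fix j r
        have "(l + \<mu>) ^ r = (\<Sum>q\<le>r. of_nat (r choose q) * \<mu> ^ q * l ^ (r - q))"
          by (subst add.commute) (rule binomial_ring)
        thus "(\<Sum>q\<le>r. wsc (l ^ j * (of_nat (r choose q) * \<mu> ^ q * l ^ (r - q))) (?w j r)) = wsc (l ^ j) (wsc ((l + \<mu>) ^ r) (?w j r))"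
          by (simp add: W.scale_sum_left[symmetric] sum_distrib_left)
      qed
      thus ?thesis by (simp add: W.scale_sum_right)
    qed
    also have "\<dots> = (\<Sum>j<4 * N. wsc (l ^ j) (Gam (evR (2 * N) (?Z j) (- (l + \<mu>))) (evR N c (l + \<mu> + d)) (l + \<mu>) d))"
    proof (rule sum.cong[OF refl])
      fix j
      have "(\<Sum>r<4 * N. wsc ((l + \<mu>) ^ r) (?w j r)) = EV2 ?M (?W j) (l + \<mu>) d"
      proof -
        have "(\<Sum>r<4 * N. wsc ((l + \<mu>) ^ r) (?w j r)) = (\<Sum>r<?M. wsc ((l + \<mu>) ^ r) (?w j r))"
          by (rule sum.mono_neutral_left) (use R_br_high[OF Zb c2, of _ j] in auto)
        thus ?thesis by (simp add: EV2_def)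
      qed
      also have "\<dots> = Gam (evR (2 * N) (?Z j) (- (l + \<mu>))) (evR N c (l + \<mu> + d)) (l + \<mu>) d"
        unfolding EVAL[OF Zb c2 M4] eC2 ..
      finally show "wsc (l ^ j) (\<Sum>r<4 * N. wsc ((l + \<mu>) ^ r) (?w j r)) = wsc (l ^ j) (Gam (evR (2 * N) (?Z j) (- (l + \<mu>))) (evR N c (l + \<mu> + d)) (l + \<mu>) d)"
        by simp
    qed
    also have "\<dots> = Gam (\<Sum>j<4 * N. wsc (l ^ j) (evR (2 * N) (?Z j) (- (l + \<mu>)))) (evR N c (l + \<mu> + d)) (l + \<mu>) d"
      unfolding Gam_scL[symmetric] Gam_sumL[symmetric] ..
    also have "(\<Sum>j<4 * N. wsc (l ^ j) (evR (2 * N) (?Z j) (- (l + \<mu>)))) = Gam ?A (evR N b (l + - (l + \<mu>))) l (- (l + \<mu>))"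
    proof -
      have "(\<Sum>j<4 * N. wsc (l ^ j) (evR (2 * N) (?Z j) (- (l + \<mu>)))) = (\<Sum>j<2 * N. wsc (l ^ j) (evR (2 * N) (?Z j) (- (l + \<mu>))))"
        by (rule sum.mono_neutral_right) (use Zh in auto)
      also have "\<dots> = EV2 (2 * N) (R_br sm br \<beta> a b) l (- (l + \<mu>))" by (simp add: EV2_def)
      also have "\<dots> = Gam ?A (evR N b (l + - (l + \<mu>))) l (- (l + \<mu>))" by (rule EVAL[OF a b order_refl])
      finally show ?thesis .
    qed
    finally have RHS2: "EV3 ?M (\<lambda>p q. \<Sum>j\<le>p. R_sc sm (of_nat ((p + q - j) choose q)) (?W j (p + q - j))) l \<mu> d
      = Gam (Gam ?A (evR N b (l + - (l + \<mu>))) l (- (l + \<mu>))) (evR N c (l + \<mu> + d)) (l + \<mu>) d" .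
    have e1: "\<mu> + (l + d) = l + \<mu> + d" "l + (\<mu> + d) = l + \<mu> + d" "l + - (l + \<mu>) = - \<mu>" "- (l + \<mu>) = - l - \<mu>"
      by (simp_all add: algebra_simps)
    have e2: "l + (- l - \<mu>) = - \<mu>" by simp
    show "EV3 ?M (\<lambda>p q. R_br sm br \<beta> a (?X q) p) l \<mu> d = EV3 ?M (\<lambda>p q. R_br sm br \<beta> b (?Y p) q
        + (\<Sum>j\<le>p. R_sc sm (of_nat ((p + q - j) choose q)) (?W j (p + q - j)))) l \<mu> d"
      unfolding EV3_add LHS RHS1 RHS2 e1 e2
      by (rule JAC_Gam[OF wbnd_evR[OF a] wbnd_evR[OF b] wbnd_evR[OF c]])
  qed
qed

end

context LS begin

lemma carrierD: fixes a :: "'a Relt" shows "a \<in> R_carrier \<Longrightarrow> finite {(k, m, n). a k m n \<noteq> 0} \<and> (\<forall>k. cE (a k 0 0) = 0)"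
  by (simp add: R_carrier_def)

lemma carrier_add: fixes a b :: "'a Relt" assumes "a \<in> R_carrier" "b \<in> R_carrier" shows "a + b \<in> R_carrier"
proof -
  have z: "\<And>k m n. a k m n = 0 \<Longrightarrow> b k m n = 0 \<Longrightarrow> (a + b) k m n = 0" by simp
  have sub: "{(k, m, n). (a + b) k m n \<noteq> 0} \<subseteq> {(k, m, n). a k m n \<noteq> 0} \<union> {(k, m, n). b k m n \<noteq> 0}"
    using z by blast
  have "finite {(k, m, n). (a + b) k m n \<noteq> 0}"
    using finite_subset[OF sub] carrierD[OF assms(1)] carrierD[OF assms(2)] by blast
  thus ?thesis using carrierD[OF assms(1)] carrierD[OF assms(2)] by (simp add: R_carrier_def)
qed

lemma carrier_sc: fixes a :: "'a Relt" assumes "a \<in> R_carrier" shows "R_sc sm z a \<in> R_carrier"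
proof -
  have sub: "{(k, m, n). R_sc sm z a k m n \<noteq> 0} \<subseteq> {(k, m, n). a k m n \<noteq> 0}" by (auto simp: R_sc_def)
  have "finite {(k, m, n). R_sc sm z a k m n \<noteq> 0}" using finite_subset[OF sub] carrierD[OF assms] by blast
  thus ?thesis using carrierD[OF assms] by (simp add: R_carrier_def R_sc_def csc_def)
qed

lemma carrier_D: fixes a :: "'a Relt" assumes "a \<in> R_carrier" shows "R_D a \<in> R_carrier"
proof -
  have sub: "{(k, m, n). R_D a k m n \<noteq> 0} \<subseteq> (\<lambda>(k, m, n). (Suc k, m, n)) ` {(k, m, n). a k m n \<noteq> 0}"
  proof
    fix x assume "x \<in> {(k, m, n). R_D a k m n \<noteq> 0}"
    then obtain k m n where x: "x = (k, m, n)" and nz: "R_D a k m n \<noteq> 0" by auto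
    then obtain k' where k: "k = Suc k'" by (cases k) (auto simp: R_D_def)
    hence "a k' m n \<noteq> 0" using nz by (simp add: R_D_def)
    thus "x \<in> (\<lambda>(k, m, n). (Suc k, m, n)) ` {(k, m, n). a k m n \<noteq> 0}" using x k by force
  qed
  have "finite {(k, m, n). R_D a k m n \<noteq> 0}" using finite_subset[OF sub] carrierD[OF assms] by blast
  moreover have "\<forall>k. cE (R_D a k 0 0) = 0" using carrierD[OF assms] by (auto simp: R_D_def split: nat.splits)
  ultimately show ?thesis by (simp add: R_carrier_def)
qed

lemma carrier_lb: assumes "a \<in> R_carrier" "b \<in> R_carrier"
  shows "R_br sm br \<beta> a b j \<in> R_carrier \<and> finite {j. R_br sm br \<beta> a b j \<noteq> 0}"
proof -
  obtain N where a: "bndR N a" and b: "bndR N b" using carrier_bnd3[OF assms assms(1)] by blast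
  have "{(k, m, n). R_br sm br \<beta> a b j k m n \<noteq> 0} \<subseteq> {..<2 * N} \<times> {..<2 * N} \<times> {..<2 * N}"
    using R_br_bnd[OF a b] by auto
  hence "finite {(k, m, n). R_br sm br \<beta> a b j k m n \<noteq> 0}" by (rule finite_subset) simp
  hence "R_br sm br \<beta> a b j \<in> R_carrier" using cE_R_br[OF a b] by (simp add: R_carrier_def)
  moreover have "{j. R_br sm br \<beta> a b j \<noteq> 0} \<subseteq> {..<2 * N}" using R_br_high[OF a b] by (auto intro: ccontr)
  hence "finite {j. R_br sm br \<beta> a b j \<noteq> 0}" by (rule finite_subset) simp
  ultimately show ?thesis by simp
qed

lemma main: "lie_conformal_algebra R_carrier (R_sc sm) R_D (R_br sm br \<beta>)"
  unfolding lie_conformal_algebra_def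
proof (intro conjI ballI allI)
  show "vector_space (R_sc sm)" by (rule Rsc_vs)
  have e: "{(k, m, n). (0::'a Relt) k m n \<noteq> 0} = {}" by auto
  have "finite {(k, m, n). (0::'a Relt) k m n \<noteq> 0}" unfolding e by simp
  thus "0 \<in> R_carrier" by (simp add: R_carrier_def)
  fix a b :: "'a Relt" assume a: "a \<in> R_carrier" and b: "b \<in> R_carrier"
  show "a + b \<in> R_carrier" by (rule carrier_add[OF a b])
  show "R_D (a + b) = R_D a + R_D b" by (simp add: R_D_def fun_eq_iff split: nat.splits)
  fix j
  show "R_br sm br \<beta> a b j \<in> R_carrier" using carrier_lb[OF a b] by simp
next
  fix z and a :: "'a Relt" assume a: "a \<in> R_carrier"
  show "R_sc sm z a \<in> R_carrier" by (rule carrier_sc[OF a])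
  show "R_D (R_sc sm z a) = R_sc sm z (R_D a)" by (simp add: R_D_def R_sc_def fun_eq_iff split: nat.splits)
next
  fix a :: "'a Relt" assume a: "a \<in> R_carrier"
  show "R_D a \<in> R_carrier" by (rule carrier_D[OF a])
next
  fix a b :: "'a Relt" assume a: "a \<in> R_carrier" and b: "b \<in> R_carrier"
  show "finite {j. R_br sm br \<beta> a b j \<noteq> 0}" using carrier_lb[OF a b] by simp
next
  fix a b c :: "'a Relt" and j assume a: "a \<in> R_carrier" and b: "b \<in> R_carrier" and c: "c \<in> R_carrier"
  obtain N where aN: "bndR N a" and bN: "bndR N b" and cN: "bndR N c" using carrier_bnd3[OF a b c] by blast
  show "R_br sm br \<beta> (a + b) c j = R_br sm br \<beta> a c j + R_br sm br \<beta> b c j"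
    using lb_addL[OF aN bN cN] by simp
  show "R_br sm br \<beta> a (b + c) j = R_br sm br \<beta> a b j + R_br sm br \<beta> a c j"
    using lb_addR[OF aN bN cN] by simp
next
  fix z and a b :: "'a Relt" and j assume a: "a \<in> R_carrier" and b: "b \<in> R_carrier"
  obtain N where aN: "bndR N a" and bN: "bndR N b" using carrier_bnd3[OF a b a] by blast
  show "R_br sm br \<beta> (R_sc sm z a) b j = R_sc sm z (R_br sm br \<beta> a b j)"
    using lb_scL[OF aN bN] by simp
  show "R_br sm br \<beta> a (R_sc sm z b) j = R_sc sm z (R_br sm br \<beta> a b j)"
    using lb_scR[OF aN bN] by simp
next
  fix a b :: "'a Relt" assume a: "a \<in> R_carrier" and b: "b \<in> R_carrier"
  obtain N where aN: "bndR N a" and bN: "bndR N b" using carrier_bnd3[OF a b a] by blast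
  show "R_br sm br \<beta> (R_D a) b 0 = 0" using sesq1[OF aN bN] by simp
  show "R_br sm br \<beta> a (R_D b) 0 = R_D (R_br sm br \<beta> a b 0)" using sesq2[OF aN bN] by simp
  fix j
  show "R_br sm br \<beta> (R_D a) b (Suc j) = - R_br sm br \<beta> a b j" using sesq1[OF aN bN] by simp
  show "R_br sm br \<beta> a (R_D b) (Suc j) = R_br sm br \<beta> a b j + R_D (R_br sm br \<beta> a b (Suc j))"
    using sesq2[OF aN bN] by simp
next
  fix a b :: "'a Relt" and j assume a: "a \<in> R_carrier" and b: "b \<in> R_carrier"
  obtain N where aN: "bndR N a" and bN: "bndR N b" using carrier_bnd3[OF a b a] by blast
  show "R_br sm br \<beta> a b j = - (\<Sum>i\<in>{i. R_br sm br \<beta> b a i \<noteq> 0}.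
      R_sc sm ((-1) ^ i * of_nat (i choose j)) ((R_D ^^ (i - j)) (R_br sm br \<beta> b a i)))"
    by (subst skew[OF aN bN]) simp
next
  fix a b c :: "'a Relt" and p q assume a: "a \<in> R_carrier" and b: "b \<in> R_carrier" and c: "c \<in> R_carrier"
  obtain N where aN: "bndR N a" and bN: "bndR N b" and cN: "bndR N c" using carrier_bnd3[OF a b c] by blast
  show "R_br sm br \<beta> a (R_br sm br \<beta> b c q) p = R_br sm br \<beta> b (R_br sm br \<beta> a c p) q
      + (\<Sum>j\<le>p. R_sc sm (of_nat ((p + q - j) choose q)) (R_br sm br \<beta> (R_br sm br \<beta> a b j) c (p + q - j)))"
    using fun_cong[OF fun_cong[OF jacobi[OF aN bN cN], of p], of q] by simp
qed

end

theorem proposition3p2: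
  fixes sm :: "complex \<Rightarrow> 'a::ab_group_add \<Rightarrow> 'a"
    and br :: "'a \<Rightarrow> 'a \<Rightarrow> 'a"
    and \<beta> :: complex
  assumes "complex_lie_algebra sm br"
  shows "lie_conformal_algebra R_carrier (R_sc sm) R_D (R_br sm br \<beta>)"
proof -
  interpret L: LS sm br \<beta> using assms by (rule LS.intro)
  show ?thesis by (rule L.main)
qed


end
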